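(* For every ground finite multiset of facts $F$ and all sentences $\varphi,\varphi_1,\varphi_2$ and $\exists P.\psi$: 1. $\mathrm{Init}_\varphi(F)\to^!\mathrm{Sat}(\mathsf{true})$ or $\mathrm{Init}_\varphi(F)\to^!\mathrm{Sat}(\mathsf{false})$, and these are the only possible normal forms of $\mathrm{Init}_\varphi(F)$. 2. $\mathrm{Init}_{\mathrm{False}}(F)\to^!\mathrm{Sat}(\mathsf{false})$ and never $\mathrm{Init}_{\mathrm{False}}(F)\to^!\mathrm{Sat}(\mathsf{true})$. 3. For all Booleans $B$: $\mathrm{Init}_\varphi(F)\to^!\mathrm{Sat}(B)$ iff $\mathrm{Init}_{\neg\varphi}(F)\to^!\mathrm{Sat}(\neg B)$. 4. $\mathrm{Init}_{\varphi_1\vee\varphi_2}(F)\to^!\mathrm{Sat}(\mathsf{true})$ iff $\mathrm{Init}_{\varphi_1}(F)\to^!\mathrm{Sat}(\mathsf{true})$ or $\mathrm{Init}_{\varphi_2}(F)\to^!\mathrm{Sat}(\mathsf{true})$. 5. $\mathrm{Init}_{\varphi_1\vee\varphi_2}(F)\to^!\mathrm{Sat}(\mathsf{false})$ iff $\mathrm{Init}_{\varphi_1}(F)\to^!\mathrm{Sat}(\mathsf{false})$ and $\mathrm{Init}_{\varphi_2}(F)\to^!\mathrm{Sat}(\mathsf{false})$. 6. $\mathrm{Init}_{\exists P.\psi}(F)\to^!\mathrm{Sat}(\mathsf{true})$ iff there exist a substitution $\sigma$ and a multiset $F'$ with $F'\circ\sigma(P_?\circ P_!)=F$ and $\mathrm{Init}_{\sigma(\psi)}(F)\to^!\mathrm{Sat}(\mathsf{true})$.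 7. $\mathrm{Init}_{\exists P.\psi}(F)\to^!\mathrm{Sat}(\mathsf{false})$ iff there exist ground multisets of facts $F_0,\dots,F_n$ and $G_0,\dots,G_{n-1}$ and substitutions $\sigma_0,\dots,\sigma_{n-1}$ such that (a) $F_0=F$, $F_{i+1}=G_i\circ\sigma_i(P_!)$ and $F_i=G_i\circ\sigma_i(P_!\circ P_?)$ for all $i\in\{0,\dots,n-1\}$; (b) $\mathrm{Init}_{\sigma_i(\psi)}(F)\to^!\mathrm{Sat}(\mathsf{false})$ for all $i\in\{0,\dots,n-1\}$; (c) there are no substitution $\sigma_n$ and multiset $G_n$ with $F_n=G_n\circ\sigma_n(P_!\circ P_?)$. 8. $\mathrm{Init}_{\varphi\vee\neg\varphi}(F)\to^!\mathrm{Sat}(\mathsf{true})$; and if both $\mathrm{Init}_\varphi(F)\to^!\mathrm{Sat}(\mathsf{true})$ and $\mathrm{Init}_\varphi(F)\to^!\mathrm{Sat}(\mathsf{false})$, then also $\mathrm{Init}_{\varphi\vee\neg\varphi}(F)\to^!\mathrm{Sat}(\mathsf{false})$.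
   Context: Setting. Fix an order-sorted signature $\Sigma$ with sorts $\mathsf{Fact}$, $\mathsf{Bool}$ and a $\Sigma$-algebra of facts $\mathcal{D}$ presented by structural axioms $A$ and confluent terminating equations, providing Boolean connectives and Boolean-valued equality; every ground $\mathsf{Bool}$ term reduces to $\mathsf{true}$ or $\mathsf{false}$. Multisets of facts: associative commutative $\circ$ with identity $\emptyset$. A terminating and preserving pattern $P$ is $[F_1]_!\circ[F_2]_?$ or $[F_2]_?$ ($F_1,F_2$ non-empty, possibly non-ground, multisets of facts); $P_!$, $P_?$ are the wrapped multisets ($P_!=\emptyset$ if absent). Conditions: $\mathrm{False}$, $\{B\}$ ($B:\mathsf{Bool}$), $\neg\psi$, $\psi_1\vee\psi_2$, $\exists P.\psi$; in $\exists P.\psi$ the quantifier binds in $\psi$ the variables of $P$ not bound by the context. $\mathrm{closed}(\varphi):=\mathrm{closed}(\varphi,\emptyset)$ with $\mathrm{closed}(\mathrm{False},V)=\mathsf{true}$, $\mathrm{closed}(\{t\},V)=(\mathrm{Var}(t)\subseteq V)$, $\mathrm{closed}(\neg\varphi,V)=\mathrm{closed}(\varphi,V)$, $\mathrm{closed}(\varphi_1\vee\varphi_2,V)=\mathrm{closed}(\varphi_1,V)\wedge\mathrm{closed}(\varphi_2,V)$, $\mathrm{closed}(\exists P.\varphi,V)=\mathrm{closed}(\varphi,V\cup\mathrm{Var}(P))$. A sentence is a closed condition. For a condition $\varphi$, the rewriting system $\mathcal{R}^{\mathrm{cond}}_{\Sigma,\mathcal{D}}(\varphi)$ has states $\{F,S\}^c$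 ($F$ ground multiset of facts, $S$ stack of frames, top at right) and terminal $\mathrm{Sat}(B)$. Frames: $\mathrm{Res}(B)$, $\mathrm{Not}$, and for subconditions $\psi$ of $\varphi$, variable lists $\vec v$ containing the free variables of $\psi$, ground values $\vec a$: $[\vec a]^{\vec v}_\psi$, $[\vec a]^{\vec v,\downarrow}_\psi$, and iterator frames $[F'\mid\vec a]^{\vec v}_{\exists P.\psi}$. With $\sigma=\{\vec a/\vec v\}$: (1) $[\vec a]_{\mathrm{False}}\mapsto\mathrm{Res}(\mathsf{false})$; (2) $[\vec a]_{\{B\}}\mapsto\mathrm{Res}(\sigma(B))$; (3) $[\vec a]_{\neg\psi}\mapsto\mathrm{Not}\,[\vec a]_\psi$; (4) $\mathrm{Not}\,\mathrm{Res}(B)\mapsto\mathrm{Res}(\neg B)$; (5) $[\vec a]_{\psi_1\vee\psi_2}\mapsto[\vec a]^{\downarrow}_{\psi_1}[\vec a]_{\psi_2}$; (6) $[\vec a]^\downarrow_\psi\mathrm{Res}(\mathsf{true})\mapsto\mathrm{Res}(\mathsf{true})$; (7) $[\vec a]^\downarrow_\psi\mathrm{Res}(\mathsf{false})\mapsto[\vec a]_\psi$; (8) $[\vec a]_{\exists P.\psi}\mapsto[F\mid\vec a]_{\exists P.\psi}$ ($F$ the database component); (9) if $\vec w$ lists the variables of $P$ not in $\vec v$, $\sigma'=\{\vec a/\vec v,\vec b/\vec w\}$, $F'=F''\circ\sigma'(P_!\circ P_?)$: $[F'\mid\vec a]_{\exists P.\psi}\mapsto[F''\circ\sigma'(P_!)\mid\vec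 a]_{\exists P.\psi}[\vec a,\vec b]^{\vec v,\vec w}_\psi$; (10) $[F'\mid\vec a]_{\exists P.\psi}\mathrm{Res}(\mathsf{false})\mapsto[F'\mid\vec a]_{\exists P.\psi}$; (11) $[F'\mid\vec a]_{\exists P.\psi}\mathrm{Res}(\mathsf{true})\mapsto\mathrm{Res}(\mathsf{true})$; (12) if no such matching of $F'$ exists, $[F'\mid\vec a]_{\exists P.\psi}\mapsto\mathrm{Res}(\mathsf{false})$; (13) $\{F,\mathrm{Res}(B)\}^c\to\mathrm{Sat}(B)$. Here "$X\mapsto Y$" denotes the rule $\{F,S\,X\}^c\to\{F,S\,Y\}^c$ for arbitrary $F,S$. $\mathrm{Init}_\varphi(F):=\{F,[\,]_\varphi\}^c$. $t\to^!t'$ means $t\to^*t'$ with $t'$ irreducible; for a sentence $\varphi$, statements about $\mathrm{Init}_\varphi(F)$ refer to $\mathcal{R}^{\mathrm{cond}}_{\Sigma,\mathcal{D}}(\varphi)$. *)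

theory Defs
  imports "HOL-Library.Multiset"
begin

datatype ('f, 'v) trm = Var 'v | Fn 'f "('f, 'v) trm list"

primrec tvars :: "('f, 'v) trm \<Rightarrow> 'v set" where
  "tvars (Var x) = {x}"
| "tvars (Fn f ts) = \<Union> (set (map tvars ts))"

definition ground :: "('f, 'v) trm \<Rightarrow> bool" where
  "ground t \<longleftrightarrow> tvars t = {}"

primrec tsubst :: "('v \<Rightarrow> ('f, 'v) trm) \<Rightarrow> ('f, 'v) trm \<Rightarrow> ('f, 'v) trm" where
  "tsubst \<sigma> (Var x) = \<sigma> x"
| "tsubst \<sigma> (Fn f ts) = Fn f (map (tsubst \<sigma>) ts)"

text \<open>Evaluation of ground terms in the algebra of facts (carrier 'd, interpretation I of
  the function symbols).  Variables are never evaluated (only ground terms are).\<close>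
primrec geval :: "('f \<Rightarrow> 'd list \<Rightarrow> 'd) \<Rightarrow> ('f, 'v) trm \<Rightarrow> 'd" where
  "geval I (Var x) = undefined"
| "geval I (Fn f ts) = I f (map (geval I) ts)"

text \<open>A ground Bool term holds iff it evaluates to the value of the constant true (symbol tr).\<close>
definition holds :: "('f \<Rightarrow> 'd list \<Rightarrow> 'd) \<Rightarrow> 'f \<Rightarrow> ('f, 'v) trm \<Rightarrow> bool" where
  "holds I tr t \<longleftrightarrow> geval I t = I tr []"

text \<open>CEx Pb Pq psi is the condition  exists P. psi  with P_! = Pb (empty if absent), P_? = Pq.\<close>
datatype ('f, 'v) cond =
    CFalse
  | CBool "('f, 'v) trm"
  | CNot "('f, 'v) cond"
  | COr "('f, 'v) cond" "('f, 'v) cond"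
  | CEx "('f, 'v) trm multiset" "('f, 'v) trm multiset" "('f, 'v) cond"

definition pvars :: "('f, 'v) trm multiset \<Rightarrow> ('f, 'v) trm multiset \<Rightarrow> 'v set" where
  "pvars Pb Pq = (\<Union>t \<in> set_mset (Pb + Pq). tvars t)"

primrec closed_in :: "('f, 'v) cond \<Rightarrow> 'v set \<Rightarrow> bool" where
  "closed_in CFalse V = True"
| "closed_in (CBool t) V = (tvars t \<subseteq> V)"
| "closed_in (CNot \<phi>) V = closed_in \<phi> V"
| "closed_in (COr \<phi>1 \<phi>2) V = (closed_in \<phi>1 V \<and> closed_in \<phi>2 V)"
| "closed_in (CEx Pb Pq \<phi>) V = closed_in \<phi> (V \<union> pvars Pb Pq)"

definition closed :: "('f, 'v) cond \<Rightarrow> bool" where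
  "closed \<phi> \<longleftrightarrow> closed_in \<phi> {}"

text \<open>All patterns are terminating and preserving: P_? non-empty (P_! arbitrary, empty = absent).\<close>
primrec wf_cond :: "('f, 'v) cond \<Rightarrow> bool" where
  "wf_cond CFalse = True"
| "wf_cond (CBool t) = True"
| "wf_cond (CNot \<phi>) = wf_cond \<phi>"
| "wf_cond (COr \<phi>1 \<phi>2) = (wf_cond \<phi>1 \<and> wf_cond \<phi>2)"
| "wf_cond (CEx Pb Pq \<phi>) = (Pq \<noteq> {#} \<and> wf_cond \<phi>)"

definition sentence :: "('f, 'v) cond \<Rightarrow> bool" where
  "sentence \<phi> \<longleftrightarrow> closed \<phi> \<and> wf_cond \<phi>"

text \<open>Substitution applied to a condition (to all occurrences, including in patterns).
  Used only with substitutions whose domain is the set of context-bound variables, so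
  no capture can occur.\<close>
primrec csubst :: "('v \<Rightarrow> ('f, 'v) trm) \<Rightarrow> ('f, 'v) cond \<Rightarrow> ('f, 'v) cond" where
  "csubst \<sigma> CFalse = CFalse"
| "csubst \<sigma> (CBool t) = CBool (tsubst \<sigma> t)"
| "csubst \<sigma> (CNot \<phi>) = CNot (csubst \<sigma> \<phi>)"
| "csubst \<sigma> (COr \<phi>1 \<phi>2) = COr (csubst \<sigma> \<phi>1) (csubst \<sigma> \<phi>2)"
| "csubst \<sigma> (CEx Pb Pq \<phi>) = CEx (image_mset (tsubst \<sigma>) Pb) (image_mset (tsubst \<sigma>) Pq) (csubst \<sigma> \<phi>)"

definition pat_subst :: "('f, 'v) trm multiset \<Rightarrow> ('f, 'v) trm multiset \<Rightarrow> ('v \<Rightarrow> ('f, 'v) trm) \<Rightarrow> bool" where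
  "pat_subst Pb Pq \<sigma> \<longleftrightarrow>
     (\<forall>x. (x \<in> pvars Pb Pq \<longrightarrow> ground (\<sigma> x)) \<and> (x \<notin> pvars Pb Pq \<longrightarrow> \<sigma> x = Var x))"

definition inst :: "('f \<Rightarrow> 'd list \<Rightarrow> 'd) \<Rightarrow> ('v \<Rightarrow> ('f, 'v) trm) \<Rightarrow> ('f, 'v) trm multiset \<Rightarrow> 'd multiset" where
  "inst I \<sigma> M = image_mset (\<lambda>t. geval I (tsubst \<sigma> t)) M"

definition env :: "'v list \<Rightarrow> ('f, 'v) trm list \<Rightarrow> 'v \<Rightarrow> ('f, 'v) trm" where
  "env vs as x = (case map_of (zip vs as) x of Some t \<Rightarrow> t | None \<Rightarrow> Var x)"

datatype ('f, 'v, 'd) frame =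
    Res bool
  | NotF
  | Ev "('f, 'v) trm list" "'v list" "('f, 'v) cond"
  | EvD "('f, 'v) trm list" "'v list" "('f, 'v) cond"
  | It "'d multiset" "('f, 'v) trm list" "'v list" "('f, 'v) cond"

datatype ('f, 'v, 'd) state = St "'d multiset" "('f, 'v, 'd) frame list" | Sat bool

definition pmatch :: "('f \<Rightarrow> 'd list \<Rightarrow> 'd) \<Rightarrow> 'd multiset \<Rightarrow> ('f, 'v) trm list \<Rightarrow> 'v list
    \<Rightarrow> ('f, 'v) trm multiset \<Rightarrow> ('f, 'v) trm multiset
    \<Rightarrow> 'v list \<Rightarrow> ('f, 'v) trm list \<Rightarrow> 'd multiset \<Rightarrow> bool" where
  "pmatch I F' as vs Pb Pq ws bs F'' \<longleftrightarrow>
     set ws = pvars Pb Pq - set vs \<and> distinct ws \<and> length bs = length ws \<and>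
     (\<forall>t \<in> set bs. ground t) \<and>
     F' = F'' + inst I (env (vs @ ws) (as @ bs)) (Pb + Pq)"

text \<open>Frame rewrites X |-> Y (stack top at the right), with database F.\<close>
inductive fstep :: "('f \<Rightarrow> 'd list \<Rightarrow> 'd) \<Rightarrow> 'f \<Rightarrow> 'd multiset
    \<Rightarrow> ('f, 'v, 'd) frame list \<Rightarrow> ('f, 'v, 'd) frame list \<Rightarrow> bool"
  for I :: "'f \<Rightarrow> 'd list \<Rightarrow> 'd" and tr :: 'f where
  r1: "fstep I tr F [Ev as vs CFalse] [Res False]"
| r2: "fstep I tr F [Ev as vs (CBool B)] [Res (holds I tr (tsubst (env vs as) B))]"
| r3: "fstep I tr F [Ev as vs (CNot \<psi>)] [NotF, Ev as vs \<psi>]"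
| r4: "fstep I tr F [NotF, Res b] [Res (\<not> b)]"
| r5: "fstep I tr F [Ev as vs (COr \<psi>1 \<psi>2)] [EvD as vs \<psi>1, Ev as vs \<psi>2]"
| r6: "fstep I tr F [EvD as vs \<psi>, Res True] [Res True]"
| r7: "fstep I tr F [EvD as vs \<psi>, Res False] [Ev as vs \<psi>]"
| r8: "fstep I tr F [Ev as vs (CEx Pb Pq \<psi>)] [It F as vs (CEx Pb Pq \<psi>)]"
| r9: "pmatch I F' as vs Pb Pq ws bs F'' \<Longrightarrow>
       fstep I tr F [It F' as vs (CEx Pb Pq \<psi>)]
         [It (F'' + inst I (env (vs @ ws) (as @ bs)) Pb) as vs (CEx Pb Pq \<psi>), Ev (as @ bs) (vs @ ws) \<psi>]"
| r10: "fstep I tr F [It F' as vs \<phi>, Res False] [It F' as vs \<phi>]"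
| r11: "fstep I tr F [It F' as vs \<phi>, Res True] [Res True]"
| r12: "\<not> (\<exists>ws bs F''. pmatch I F' as vs Pb Pq ws bs F'') \<Longrightarrow>
       fstep I tr F [It F' as vs (CEx Pb Pq \<psi>)] [Res False]"

inductive cstep :: "('f \<Rightarrow> 'd list \<Rightarrow> 'd) \<Rightarrow> 'f \<Rightarrow> ('f, 'v, 'd) state \<Rightarrow> ('f, 'v, 'd) state \<Rightarrow> bool"
  for I :: "'f \<Rightarrow> 'd list \<Rightarrow> 'd" and tr :: 'f where
  ctx: "fstep I tr F X Y \<Longrightarrow> cstep I tr (St F (S @ X)) (St F (S @ Y))"
| fin: "cstep I tr (St F [Res b]) (Sat b)"

definition nf_reach :: "('f \<Rightarrow> 'd list \<Rightarrow> 'd) \<Rightarrow> 'f \<Rightarrow> ('f, 'v, 'd) state \<Rightarrow> ('f, 'v, 'd) state \<Rightarrow> bool" where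
  "nf_reach I tr s t \<longleftrightarrow> (cstep I tr)\<^sup>*\<^sup>* s t \<and> \<not> (\<exists>u. cstep I tr t u)"

definition init :: "('f, 'v) cond \<Rightarrow> 'd multiset \<Rightarrow> ('f, 'v, 'd) state" where
  "init \<phi> F = St F [Ev [] [] \<phi>]"

abbreviation reaches :: "('f \<Rightarrow> 'd list \<Rightarrow> 'd) \<Rightarrow> 'f \<Rightarrow> ('f, 'v) cond \<Rightarrow> 'd multiset \<Rightarrow> bool \<Rightarrow> bool" where
  "reaches I tr \<phi> F b \<equiv> nf_reach I tr (init \<phi> F) (Sat b)"

end

theory Submission imports Defs begin
inductive big :: "('f \<Rightarrow> 'd list \<Rightarrow> 'd) \<Rightarrow> 'f \<Rightarrow> 'd multiset \<Rightarrow> ('f,'v,'d) frame \<Rightarrow> bool \<Rightarrow> bool"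
  for I tr F where
  b1: "big I tr F (Ev as vs CFalse) False"
| b2: "big I tr F (Ev as vs (CBool B)) (holds I tr (tsubst (env vs as) B))"
| b3: "big I tr F (Ev as vs \<psi>) b \<Longrightarrow> big I tr F (Ev as vs (CNot \<psi>)) (\<not> b)"
| b5t: "big I tr F (Ev as vs \<psi>2) True \<Longrightarrow> big I tr F (Ev as vs (COr \<psi>1 \<psi>2)) True"
| b5f: "big I tr F (Ev as vs \<psi>2) False \<Longrightarrow> big I tr F (Ev as vs \<psi>1) b \<Longrightarrow> big I tr F (Ev as vs (COr \<psi>1 \<psi>2)) b"
| b8: "big I tr F (It F as vs (CEx Pb Pq \<psi>)) b \<Longrightarrow> big I tr F (Ev as vs (CEx Pb Pq \<psi>)) b"
| b9t: "pmatch I F' as vs Pb Pq ws bb F'' \<Longrightarrow> big I tr F (Ev (as @ bb) (vs @ ws) \<psi>) True \<Longrightarrow> big I tr F (It F' as vs (CEx Pb Pq \<psi>)) True"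
| b9f: "pmatch I F' as vs Pb Pq ws bb F'' \<Longrightarrow> big I tr F (Ev (as @ bb) (vs @ ws) \<psi>) False \<Longrightarrow>
   big I tr F (It (F'' + inst I (env (vs @ ws) (as @ bb)) Pb) as vs (CEx Pb Pq \<psi>)) b \<Longrightarrow> big I tr F (It F' as vs (CEx Pb Pq \<psi>)) b"
| b12: "\<not> (\<exists>ws bb F''. pmatch I F' as vs Pb Pq ws bb F'') \<Longrightarrow> big I tr F (It F' as vs (CEx Pb Pq \<psi>)) False"


definition ss :: "('f \<Rightarrow> 'd list \<Rightarrow> 'd) \<Rightarrow> 'f \<Rightarrow> 'd multiset \<Rightarrow> ('f,'v,'d) frame list \<Rightarrow> ('f,'v,'d) frame list \<Rightarrow> bool" where
  "ss I tr F S T \<longleftrightarrow> (\<exists>S0 X Y. S = S0 @ X \<and> T = S0 @ Y \<and> fstep I tr F X Y)"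

lemma fstep_shape: "fstep I tr F X Y \<Longrightarrow> ((\<exists>A. X = [A]) \<or> (\<exists>A c. X = [A, Res c])) \<and> Y \<noteq> []"
  by (cases rule: fstep.cases) auto

lemma fstep_not_res: "\<not> fstep I tr F [Res c] Y"
  by (auto elim: fstep.cases)

lemma ss_I: "fstep I tr F X Y \<Longrightarrow> ss I tr F X Y"
  unfolding ss_def by (rule exI[of _ "[]"]) auto

lemma ss_lift: "ss I tr F S T \<Longrightarrow> ss I tr F (P @ S) (P @ T)"
  unfolding ss_def by (metis append.assoc)

lemma ss_lift_star: "(ss I tr F)\<^sup>*\<^sup>* S T \<Longrightarrow> (ss I tr F)\<^sup>*\<^sup>* (P @ S) (P @ T)"
  by (induction rule: rtranclp_induct) (auto intro: rtranclp.rtrancl_into_rtrancl ss_lift)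

lemma fstep_Y_ne: "fstep I tr F X Y \<Longrightarrow> Y \<noteq> []"
  by (cases rule: fstep.cases) auto

lemma fstep_X_ne: "fstep I tr F X Y \<Longrightarrow> X \<noteq> []"
  by (cases rule: fstep.cases) auto

lemma ss_nonempty: "ss I tr F S T \<Longrightarrow> T \<noteq> []"
  unfolding ss_def using fstep_Y_ne by fastforce

lemma ss_res:
  fixes T :: "('f,'v,'d) frame list" and I :: "'f \<Rightarrow> 'd list \<Rightarrow> 'd"
  shows "\<not> ss I tr F [Res c] T"
proof
  assume "ss I tr F [Res c] T"
  then obtain S0 X Y :: "('f,'v,'d) frame list" where e: "[Res c] = S0 @ X" and f: "fstep I tr F X Y" unfolding ss_def by blast
  have "X \<noteq> []" using fstep_X_ne[OF f] .
  then have "X = [Res c]" using e by (cases S0) auto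
  then show False using f fstep_not_res by metis
qed

lemma pow_res:
  fixes T :: "('f,'v,'d) frame list" and I :: "'f \<Rightarrow> 'd list \<Rightarrow> 'd"
  assumes "(ss I tr F ^^ n) [Res c] T" shows "n = 0 \<and> T = [Res c]"
proof (cases n)
  case (Suc m)
  have "(ss I tr F ^^ Suc m) [Res c] T" using assms unfolding Suc .
  from relpowp_Suc_D2[OF this] obtain y :: "('f,'v,'d) frame list" where "ss I tr F [Res c] y" by blast
  then show ?thesis using ss_res[of I tr F c y] by (rule notE[rotated])
next
  case 0
  then show ?thesis using assms by (metis relpowp_0_E)
qed

lemma ss_one: "ss I tr F [A] T \<Longrightarrow> fstep I tr F [A] T"
proof -
  assume "ss I tr F [A] T"
  then obtain S0 X Y where e: "[A] = S0 @ X" "T = S0 @ Y" and f: "fstep I tr F X Y" unfolding ss_def by blast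
  have "X \<noteq> []" using fstep_X_ne[OF f] .
  then have "S0 = [] \<and> X = [A]" using e(1) by (cases S0) auto
  then show ?thesis using e f by simp
qed

lemma ss_two: "ss I tr F [A, Res c] T \<Longrightarrow> fstep I tr F [A, Res c] T"
proof -
  assume "ss I tr F [A, Res c] T"
  then obtain S0 X Y where e: "[A, Res c] = S0 @ X" "T = S0 @ Y" and f: "fstep I tr F X Y" unfolding ss_def by blast
  have ne: "X \<noteq> []" using fstep_X_ne[OF f] .
  have "S0 = []"
  proof (cases S0)
    case (Cons a S1)
    then have "[Res c] = S1 @ X" using e(1) by simp
    then have "X = [Res c]" using ne by (cases S1) auto
    then show ?thesis using f fstep_not_res by metis
  qed simp
  then show ?thesis using e f by simp
qed

lemma ss_step:
  assumes "ss I tr F (P @ S) T" "S \<noteq> []" "\<forall>c. S \<noteq> [Res c]"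
  shows "\<exists>S'. T = P @ S' \<and> ss I tr F S S'"
proof -
  obtain S0 X Y where e: "P @ S = S0 @ X" "T = S0 @ Y" and f: "fstep I tr F X Y"
    using assms(1) unfolding ss_def by blast
  from e(1)[unfolded append_eq_append_conv2] obtain us where "(P = S0 @ us \<and> us @ S = X) \<or> (P @ us = S0 \<and> S = us @ X)"
    by (elim exE) (rule that)
  then show ?thesis
  proof
    assume a: "P = S0 @ us \<and> us @ S = X"
    have "us = []"
    proof (rule ccontr)
      assume "us \<noteq> []"
      then obtain u us' where u: "us = u # us'" by (cases us) auto
      from fstep_shape[OF f] show False
      proof (elim conjE disjE exE)
        fix A' assume "X = [A']"
        then show False using a u assms(2) by simp
      next
        fix A' c assume x: "X = [A', Res c]"
        then have "us' @ S = [Res c]" using a u by simp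
        then show False using assms(2,3) by (cases us') auto
      qed
    qed
    then have "P = S0" "S = X" using a by auto
    then have "T = P @ Y \<and> ss I tr F S Y" using e f ss_I by simp
    then show ?thesis by (rule exI)
  next
    assume a: "P @ us = S0 \<and> S = us @ X"
    then have "ss I tr F S (us @ Y)" using f unfolding ss_def by blast
    then have "T = P @ (us @ Y) \<and> ss I tr F S (us @ Y)" using e a by simp
    then show ?thesis by (rule exI)
  qed
qed

lemma decomp:
  assumes "(ss I tr F ^^ n) (P @ S) T" "S \<noteq> []"
  shows "(\<exists>S'. T = P @ S' \<and> (ss I tr F ^^ n) S S') \<or>
         (\<exists>k c. k \<le> n \<and> (ss I tr F ^^ k) S [Res c] \<and> (ss I tr F ^^ (n - k)) (P @ [Res c]) T)"
  using assms
proof (induction n arbitrary: S)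
  case 0
  then show ?case by auto
next
  case (Suc n)
  obtain U where u: "ss I tr F (P @ S) U" "(ss I tr F ^^ n) U T"
    using relpowp_Suc_D2[OF Suc.prems(1)] by blast
  show ?case
  proof (cases "\<exists>c. S = [Res c]")
    case True
    then obtain c where "S = [Res c]" by blast
    then show ?thesis using Suc.prems(1) by (intro disjI2 exI[of _ 0]) auto
  next
    case False
    then obtain S2 where s2: "U = P @ S2" "ss I tr F S S2"
      using ss_step[OF u(1) Suc.prems(2)] by blast
    have "S2 \<noteq> []" using ss_nonempty[OF s2(2)] .
    from Suc.IH[OF u(2)[unfolded s2(1)] this] show ?thesis
    proof
      assume "\<exists>S'. T = P @ S' \<and> (ss I tr F ^^ n) S2 S'"
      then obtain S' where "T = P @ S'" "(ss I tr F ^^ n) S2 S'" by blast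
      moreover have "(ss I tr F ^^ Suc n) S S'" by (rule relpowp_Suc_I2[where P="ss I tr F", OF s2(2)]) fact
      ultimately show ?thesis by blast
    next
      assume "\<exists>k c. k \<le> n \<and> (ss I tr F ^^ k) S2 [Res c] \<and> (ss I tr F ^^ (n - k)) (P @ [Res c]) T"
      then obtain k c where "k \<le> n" "(ss I tr F ^^ k) S2 [Res c]" "(ss I tr F ^^ (n - k)) (P @ [Res c]) T"
        by blast
      moreover have "(ss I tr F ^^ Suc k) S [Res c]" by (rule relpowp_Suc_I2[where P="ss I tr F", OF s2(2)]) fact
      ultimately show ?thesis by (intro disjI2 exI[of _ "Suc k"] exI[of _ c]) auto
    qed
  qed
qed

lemma two_step:
  assumes "(ss I tr F ^^ j) [A, Res c] [Res b]"
  shows "\<exists>U j'. j = Suc j' \<and> fstep I tr F [A, Res c] U \<and> (ss I tr F ^^ j') U [Res b]"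
proof (cases j)
  case 0 then show ?thesis using assms by auto
next
  case (Suc j')
  then obtain U where "ss I tr F [A, Res c] U" "(ss I tr F ^^ j') U [Res b]"
    using assms relpowp_Suc_D2 by metis
  then show ?thesis using Suc ss_two[of I tr F A c U] by blast
qed


lemma big_small: "big I tr F X b \<Longrightarrow> (ss I tr F)\<^sup>*\<^sup>* [X] [Res b]"
proof (induction rule: big.induct)
  case (b1 as vs)
  show ?case by (rule r_into_rtranclp, rule ss_I, rule fstep.r1)
next
  case (b2 as vs B)
  show ?case by (rule r_into_rtranclp, rule ss_I, rule fstep.r2)
next
  case (b3 as vs \<psi> b)
  have "ss I tr F [Ev as vs (CNot \<psi>)] ([NotF] @ [Ev as vs \<psi>])" by (auto intro: ss_I fstep.r3)
  moreover have "(ss I tr F)\<^sup>*\<^sup>* ([NotF] @ [Ev as vs \<psi>]) ([NotF] @ [Res b])" by (rule ss_lift_star) fact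
  moreover have "ss I tr F ([NotF] @ [Res b]) [Res (\<not> b)]" by (auto intro: ss_I fstep.r4)
  ultimately show ?case by (meson converse_rtranclp_into_rtranclp rtranclp.rtrancl_into_rtrancl)
next
  case (b5t as vs \<psi>2 \<psi>1)
  have "ss I tr F [Ev as vs (COr \<psi>1 \<psi>2)] ([EvD as vs \<psi>1] @ [Ev as vs \<psi>2])" by (auto intro: ss_I fstep.r5)
  moreover have "(ss I tr F)\<^sup>*\<^sup>* ([EvD as vs \<psi>1] @ [Ev as vs \<psi>2]) ([EvD as vs \<psi>1] @ [Res True])" by (rule ss_lift_star) fact
  moreover have "ss I tr F ([EvD as vs \<psi>1] @ [Res True]) [Res True]" by (auto intro: ss_I fstep.r6)
  ultimately show ?case by (meson converse_rtranclp_into_rtranclp rtranclp.rtrancl_into_rtrancl)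
next
  case (b5f as vs \<psi>2 \<psi>1 b)
  have "ss I tr F [Ev as vs (COr \<psi>1 \<psi>2)] ([EvD as vs \<psi>1] @ [Ev as vs \<psi>2])" by (auto intro: ss_I fstep.r5)
  moreover have "(ss I tr F)\<^sup>*\<^sup>* ([EvD as vs \<psi>1] @ [Ev as vs \<psi>2]) ([EvD as vs \<psi>1] @ [Res False])" by (rule ss_lift_star) fact
  moreover have "ss I tr F ([EvD as vs \<psi>1] @ [Res False]) [Ev as vs \<psi>1]" by (auto intro: ss_I fstep.r7)
  ultimately show ?case using b5f.IH(2) by (meson converse_rtranclp_into_rtranclp rtranclp_trans)
next
  case (b8 as vs Pb Pq \<psi> b)
  have "ss I tr F [Ev as vs (CEx Pb Pq \<psi>)] [It F as vs (CEx Pb Pq \<psi>)]" by (auto intro: ss_I fstep.r8)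
  then show ?case using b8.IH by (meson converse_rtranclp_into_rtranclp)
next
  case (b9t F' as vs Pb Pq ws bb F'' \<psi>)
  let ?F1 = "F'' + inst I (env (vs @ ws) (as @ bb)) Pb"
  have "ss I tr F [It F' as vs (CEx Pb Pq \<psi>)] ([It ?F1 as vs (CEx Pb Pq \<psi>)] @ [Ev (as @ bb) (vs @ ws) \<psi>])"
    using b9t.hyps(1) by (auto intro: ss_I fstep.r9)
  moreover have "(ss I tr F)\<^sup>*\<^sup>* ([It ?F1 as vs (CEx Pb Pq \<psi>)] @ [Ev (as @ bb) (vs @ ws) \<psi>]) ([It ?F1 as vs (CEx Pb Pq \<psi>)] @ [Res True])" by (rule ss_lift_star) fact
  moreover have "ss I tr F ([It ?F1 as vs (CEx Pb Pq \<psi>)] @ [Res True]) [Res True]" by (auto intro: ss_I fstep.r11)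
  ultimately show ?case by (meson converse_rtranclp_into_rtranclp rtranclp.rtrancl_into_rtrancl)
next
  case (b9f F' as vs Pb Pq ws bb F'' \<psi> b)
  let ?F1 = "F'' + inst I (env (vs @ ws) (as @ bb)) Pb"
  have "ss I tr F [It F' as vs (CEx Pb Pq \<psi>)] ([It ?F1 as vs (CEx Pb Pq \<psi>)] @ [Ev (as @ bb) (vs @ ws) \<psi>])"
    using b9f.hyps(1) by (auto intro: ss_I fstep.r9)
  moreover have "(ss I tr F)\<^sup>*\<^sup>* ([It ?F1 as vs (CEx Pb Pq \<psi>)] @ [Ev (as @ bb) (vs @ ws) \<psi>]) ([It ?F1 as vs (CEx Pb Pq \<psi>)] @ [Res False])" by (rule ss_lift_star) fact
  moreover have "ss I tr F ([It ?F1 as vs (CEx Pb Pq \<psi>)] @ [Res False]) [It ?F1 as vs (CEx Pb Pq \<psi>)]" by (auto intro: ss_I fstep.r10)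
  ultimately show ?case using b9f.IH(2) by (meson converse_rtranclp_into_rtranclp rtranclp_trans)
next
  case (b12 F' as vs Pb Pq \<psi>)
  show ?case using b12 by (auto intro!: r_into_rtranclp ss_I fstep.r12)
qed

lemma small_big:
  fixes X :: "('f,'v,'d) frame"
  assumes "(ss I tr F ^^ n) [X] [Res b]" "\<forall>c. X \<noteq> Res c"
  shows "big I tr F X b"
  using assms
proof (induction n arbitrary: X b rule: less_induct)
  case (less n)
  obtain m where n: "n = Suc m" using less.prems by (cases n) auto
  have "(ss I tr F ^^ Suc m) [X] [Res b]" using less.prems(1) unfolding n .
  from relpowp_Suc_D2[OF this] obtain Y1 where y1: "ss I tr F [X] Y1" "(ss I tr F ^^ m) Y1 [Res b]"
    by blast
  have IH: "\<And>k (Z :: ('f,'v,'d) frame) c. k < Suc m \<Longrightarrow> (ss I tr F ^^ k) [Z] [Res c] \<Longrightarrow> \<forall>c. Z \<noteq> Res c \<Longrightarrow> big I tr F Z c"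
    using less.IH unfolding n by blast
  have f: "fstep I tr F [X] Y1" by (rule ss_one[OF y1(1)])
  from f show ?case
  proof (cases rule: fstep.cases)
    case (r1 as vs)
    have "b = False" using pow_res[OF y1(2)[unfolded r1(2)]] by simp
    then show ?thesis using r1 by (simp add: big.b1)
  next
    case (r2 as vs B)
    have "b = holds I tr (tsubst (env vs as) B)" using pow_res[OF y1(2)[unfolded r2(2)]] by simp
    then show ?thesis using r2 by (simp add: big.b2)
  next
    case (r3 as vs \<psi>)
    have "(ss I tr F ^^ m) ([NotF] @ [Ev as vs \<psi>]) [Res b]" using y1(2) r3 by simp
    from decomp[OF this] obtain k c where kc: "k \<le> m" "(ss I tr F ^^ k) [Ev as vs \<psi>] [Res c]"
       "(ss I tr F ^^ (m - k)) [NotF, Res c] ([Res b] :: ('f,'v,'d) frame list)" by auto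
    have h1: "big I tr F (Ev as vs \<psi>) c" using IH[OF _ kc(2)] kc(1) by simp
    obtain U :: "('f,'v,'d) frame list" and j' where u: "fstep I tr F [NotF, Res c] U" "(ss I tr F ^^ j') U [Res b]"
      using two_step[OF kc(3)] by blast
    have hu: "U = [Res (\<not> c)]" using u(1) by (cases rule: fstep.cases) auto
    have "b = (\<not> c)" using pow_res[OF u(2)[unfolded hu]] by simp
    then show ?thesis using r3 big.b3[OF h1] by simp
  next
    case (r5 as vs \<psi>1 \<psi>2)
    have "(ss I tr F ^^ m) ([EvD as vs \<psi>1] @ [Ev as vs \<psi>2]) [Res b]" using y1(2) r5 by simp
    from decomp[OF this] obtain k c where kc: "k \<le> m" "(ss I tr F ^^ k) [Ev as vs \<psi>2] [Res c]"
       "(ss I tr F ^^ (m - k)) [EvD as vs \<psi>1, Res c] [Res b]" by auto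
    have ih2: "big I tr F (Ev as vs \<psi>2) c" using IH[OF _ kc(2)] kc(1) by simp
    obtain U j' where u: "m - k = Suc j'" "fstep I tr F [EvD as vs \<psi>1, Res c] U" "(ss I tr F ^^ j') U [Res b]"
      using two_step[OF kc(3)] by blast
    from u(2) show ?thesis
    proof (cases rule: fstep.cases)
      case r6
      then have "(ss I tr F ^^ j') [Res True] ([Res b] :: ('f,'v,'d) frame list)" using u(3) by simp
      then have "b = True" using pow_res by fastforce
      then show ?thesis using r5 r6 ih2 big.b5t by simp
    next
      case r7
      have "big I tr F (Ev as vs \<psi>1) b" using IH[of j'] u(1,3) r7 by simp
      then show ?thesis using ih2 r7 r5 big.b5f by simp
    qed
  next
    case (r8 as vs Pb Pq \<psi>)
    have "big I tr F (It F as vs (CEx Pb Pq \<psi>)) b" using IH[of m] y1(2) r8 by simp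
    then show ?thesis using r8 big.b8 by simp
  next
    case (r9 F' as vs Pb Pq ws bb F'' \<psi>)
    let ?F1 = "F'' + inst I (env (vs @ ws) (as @ bb)) Pb"
    have "(ss I tr F ^^ m) ([It ?F1 as vs (CEx Pb Pq \<psi>)] @ [Ev (as @ bb) (vs @ ws) \<psi>]) [Res b]" using y1(2) r9 by simp
    from decomp[OF this] obtain k c where kc: "k \<le> m" "(ss I tr F ^^ k) [Ev (as @ bb) (vs @ ws) \<psi>] [Res c]"
       "(ss I tr F ^^ (m - k)) [It ?F1 as vs (CEx Pb Pq \<psi>), Res c] [Res b]" by auto
    have ih2: "big I tr F (Ev (as @ bb) (vs @ ws) \<psi>) c" using IH[OF _ kc(2)] kc(1) by simp
    obtain U j' where u: "m - k = Suc j'" "fstep I tr F [It ?F1 as vs (CEx Pb Pq \<psi>), Res c] U" "(ss I tr F ^^ j') U [Res b]"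
      using two_step[OF kc(3)] by blast
    from u(2) show ?thesis
    proof (cases rule: fstep.cases)
      case r11
      then have "(ss I tr F ^^ j') [Res True] ([Res b] :: ('f,'v,'d) frame list)" using u(3) by simp
      then have "b = True" using pow_res by fastforce
      then show ?thesis using r9 r11 ih2 big.b9t by simp
    next
      case r10
      have "big I tr F (It ?F1 as vs (CEx Pb Pq \<psi>)) b" using IH[of j'] u(1,3) r10 by simp
      then show ?thesis using ih2 r10 r9 big.b9f by simp
    qed
  next
    case (r12 F' as vs Pb Pq \<psi>)
    have "b = False" using pow_res[OF y1(2)[unfolded r12(2)]] by simp
    then show ?thesis using r12 big.b12 by simp
  qed
qed

lemma small_big_iff:
  assumes "\<forall>c. X \<noteq> Res c"
  shows "(ss I tr F)\<^sup>*\<^sup>* [X] [Res b] \<longleftrightarrow> big I tr F X b"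
proof
  assume "(ss I tr F)\<^sup>*\<^sup>* [X] [Res b]"
  then obtain n where "(ss I tr F ^^ n) [X] [Res b]" unfolding rtranclp_power by blast
  then show "big I tr F X b" using small_big[OF _ assms] by blast
qed (rule big_small)


lemma cstep_St:
  assumes "cstep I tr (St F S) t"
  shows "(\<exists>T. t = St F T \<and> ss I tr F S T) \<or> (\<exists>b. S = [Res b] \<and> t = Sat b)"
  using assms
proof (cases rule: cstep.cases)
  case ctx
  then show ?thesis unfolding ss_def by auto
next
  case fin
  then show ?thesis by auto
qed

lemma cstep_Sat: "\<not> cstep I tr (Sat b) t"
proof
  assume "cstep I tr (Sat b) t" then show False by (cases rule: cstep.cases)
qed

lemma ss_cstep:
  assumes "ss I tr F S T" shows "cstep I tr (St F S) (St F T)"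
proof -
  obtain S0 X Y where e: "S = S0 @ X" "T = S0 @ Y" and f: "fstep I tr F X Y"
    using assms unfolding ss_def by blast
  show ?thesis unfolding e by (rule cstep.ctx[OF f])
qed

lemma ss_cstep_star: "(ss I tr F)\<^sup>*\<^sup>* S T \<Longrightarrow> (cstep I tr)\<^sup>*\<^sup>* (St F S) (St F T)"
proof (induction rule: rtranclp_induct)
  case base then show ?case by simp
next
  case (step y z)
  show ?case by (rule rtranclp.rtrancl_into_rtrancl[OF step.IH ss_cstep[OF step(2)]])
qed

lemma cstep_star_inv:
  assumes "(cstep I tr)\<^sup>*\<^sup>* (St F S) t"
  shows "(\<forall>b. t = Sat b \<longrightarrow> (ss I tr F)\<^sup>*\<^sup>* S [Res b]) \<and> (\<forall>F' T. t = St F' T \<longrightarrow> F' = F \<and> (ss I tr F)\<^sup>*\<^sup>* S T)"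
  using assms
proof (induction rule: rtranclp_induct)
  case base
  then show ?case by simp
next
  case (step u t)
  show ?case
  proof (cases u)
    case (St F1 T1)
    then have h: "F1 = F" "(ss I tr F)\<^sup>*\<^sup>* S T1" using step.IH by auto
    have "cstep I tr (St F T1) t" using step.hyps(2) St h(1) by simp
    from cstep_St[OF this] show ?thesis
    proof
      assume "\<exists>T. t = St F T \<and> ss I tr F T1 T"
      then obtain T where "t = St F T" "ss I tr F T1 T" by blast
      then show ?thesis using h(2) by (simp add: rtranclp.rtrancl_into_rtrancl)
    next
      assume "\<exists>b. T1 = [Res b] \<and> t = Sat b"
      then obtain b where "T1 = [Res b]" "t = Sat b" by blast
      then show ?thesis using h(2) by simp
    qed
  next
    case (Sat b)
    then have "cstep I tr (Sat b) t" using step.hyps(2) by simp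
    with cstep_Sat[of I tr b t] show ?thesis by (rule notE)
  qed
qed

lemma reaches_big: "nf_reach I tr (init \<phi> F) (Sat b) \<longleftrightarrow> big I tr F (Ev [] [] \<phi>) b"
proof
  assume "nf_reach I tr (init \<phi> F) (Sat b)"
  then have cs: "(cstep I tr)\<^sup>*\<^sup>* (St F [Ev [] [] \<phi>]) (Sat b)" unfolding nf_reach_def init_def by simp
  have "(ss I tr F)\<^sup>*\<^sup>* [Ev [] [] \<phi>] [Res b]" using cstep_star_inv[OF cs] by simp
  then show "big I tr F (Ev [] [] \<phi>) b" using small_big_iff[of "Ev [] [] \<phi>" I tr F b] by simp
next
  assume "big I tr F (Ev [] [] \<phi>) b"
  then have "(ss I tr F)\<^sup>*\<^sup>* [Ev [] [] \<phi>] [Res b]" by (rule big_small)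
  then have "(cstep I tr)\<^sup>*\<^sup>* (St F [Ev [] [] \<phi>]) (St F [Res b])" by (rule ss_cstep_star)
  moreover have "cstep I tr (St F [Res b]) (Sat b)" by (rule cstep.fin)
  ultimately have "(cstep I tr)\<^sup>*\<^sup>* (St F [Ev [] [] \<phi>]) (Sat b)" by (rule rtranclp.rtrancl_into_rtrancl)
  then show "nf_reach I tr (init \<phi> F) (Sat b)"
    unfolding nf_reach_def init_def by (auto elim: cstep.cases)
qed

fun waiting :: "('f,'v,'d) frame \<Rightarrow> bool" where
  "waiting NotF = True"
| "waiting (EvD _ _ _) = True"
| "waiting (It _ _ _ \<phi>) = (case \<phi> of CEx _ _ _ \<Rightarrow> True | _ \<Rightarrow> False)"
| "waiting _ = False"

fun active :: "('f,'v,'d) frame \<Rightarrow> bool" where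
  "active (Ev _ _ _) = True"
| "active (Res _) = True"
| "active (It _ _ _ \<phi>) = (case \<phi> of CEx _ _ _ \<Rightarrow> True | _ \<Rightarrow> False)"
| "active _ = False"

definition good :: "('f,'v,'d) frame list \<Rightarrow> bool" where
  "good S \<longleftrightarrow> (\<exists>S0 A. S = S0 @ [A] \<and> (\<forall>x\<in>set S0. waiting x) \<and> active A)"

lemma good_one: "good (S0 @ [A]) \<longleftrightarrow> (\<forall>x\<in>set S0. waiting x) \<and> active A"
  unfolding good_def by auto

lemma good_two: "good (S0 @ [A, B]) \<longleftrightarrow> (\<forall>x\<in>set S0. waiting x) \<and> waiting A \<and> active B"
  using good_one[of "S0 @ [A]" B] by auto

lemma good_pres: "ss I tr F S T \<Longrightarrow> good S \<Longrightarrow> good T"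
  unfolding ss_def
  by (auto elim!: fstep.cases simp: good_one good_two split: cond.splits)

lemma good_star: "(ss I tr F)\<^sup>*\<^sup>* S T \<Longrightarrow> good S \<Longrightarrow> good T"
  by (induction rule: rtranclp_induct) (auto intro: good_pres)

lemma good_progress:
  assumes "good S"
  shows "\<exists>u. cstep I tr (St F S) u"
proof -
  obtain S0 A where s: "S = S0 @ [A]" "\<forall>x\<in>set S0. waiting x" "active A"
    using assms unfolding good_def by blast
  have ex: "\<exists>Y. fstep I tr F X Y \<Longrightarrow> \<exists>u. cstep I tr (St F (P @ X)) u" for P X
    by (auto intro: cstep.ctx)
  show ?thesis
  proof (cases A)
    case (Ev as vs \<phi>)
    then show ?thesis using s ex[of "[Ev as vs \<phi>]" S0]
      by (cases \<phi>) (auto intro: fstep.intros)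
  next
    case (It F' as vs \<phi>)
    then obtain Pb Pq \<psi> where ph: "\<phi> = CEx Pb Pq \<psi>" using s by (cases \<phi>) auto
    have "\<exists>Y. fstep I tr F [It F' as vs (CEx Pb Pq \<psi>)] Y"
    proof (cases "\<exists>ws bb F''. pmatch I F' as vs Pb Pq ws bb F''")
      case True
      then obtain ws bb F'' where "pmatch I F' as vs Pb Pq ws bb F''" by blast
      from fstep.r9[OF this] show ?thesis by (rule exI)
    next
      case False
      from fstep.r12[OF this] show ?thesis by (rule exI)
    qed
    from ex[OF this, of S0] show ?thesis using s(1) It ph by simp
  next
    case (Res c)
    show ?thesis
    proof (cases S0 rule: rev_cases)
      case Nil
      then show ?thesis using s Res by (auto intro: cstep.fin)
    next
      case (snoc S1 B)
      then have "waiting B" using s by auto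
      moreover have "S = S1 @ [B, Res c]" using s snoc Res by auto
      ultimately show ?thesis using ex[of "[B, Res c]" S1]
        by (cases B; cases c) (auto intro: fstep.intros split: cond.splits)
    qed
  qed (use s in auto)
qed


lemma size_inst: "size (inst I \<sigma> M) = size M"
  by (simp add: inst_def)

lemma big_exists: "wf_cond \<psi> \<Longrightarrow> \<exists>b. big I tr F (Ev as vs \<psi>) b"
proof (induction \<psi> arbitrary: as vs)
  case CFalse then show ?case by (auto intro: big.intros)
next
  case (CBool x) then show ?case by (auto intro: big.intros)
next
  case (CNot \<psi>)
  then have "\<exists>c. big I tr F (Ev as vs \<psi>) c" by simp
  then obtain c where "big I tr F (Ev as vs \<psi>) c" by (rule exE)
  from big.b3[OF this] show ?case by (rule exI)
next
  case (COr \<psi>1 \<psi>2)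
  have "\<exists>c. big I tr F (Ev as vs \<psi>2) c" using COr.IH(2)[of as vs] COr.prems by simp
  then obtain c where c: "big I tr F (Ev as vs \<psi>2) c" by (rule exE)
  have "\<exists>d. big I tr F (Ev as vs \<psi>1) d" using COr.IH(1)[of as vs] COr.prems by simp
  then obtain d where d: "big I tr F (Ev as vs \<psi>1) d" by (rule exE)
  show ?case using c d by (cases c) (auto intro: big.intros)
next
  case (CEx Pb Pq \<psi>)
  have "\<exists>b. big I tr F (It F' as vs (CEx Pb Pq \<psi>)) b" for F'
  proof (induction "size F'" arbitrary: F' rule: less_induct)
    case less
    show ?case
    proof (cases "\<exists>ws bb F''. pmatch I F' as vs Pb Pq ws bb F''")
      case True
      then obtain ws bb F'' where pm: "pmatch I F' as vs Pb Pq ws bb F''" by blast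
      have "\<exists>c. big I tr F (Ev (as @ bb) (vs @ ws) \<psi>) c" using CEx.IH[of "as @ bb" "vs @ ws"] CEx.prems by simp
      then obtain c where c: "big I tr F (Ev (as @ bb) (vs @ ws) \<psi>) c" by (rule exE)
      show ?thesis
      proof (cases c)
        case True then show ?thesis using c pm by (auto intro: big.b9t)
      next
        case False
        let ?F1 = "F'' + inst I (env (vs @ ws) (as @ bb)) Pb"
        have "size ?F1 < size F'" using pm CEx.prems
          by (simp add: pmatch_def size_inst inst_def nonempty_has_size)
        then obtain b where "big I tr F (It ?F1 as vs (CEx Pb Pq \<psi>)) b" using less by blast
        then show ?thesis using c pm False by (auto intro: big.b9f)
      qed
    next
      case False
      from big.b12[OF False] show ?thesis by (rule exI)
    qed
  qed
  then show ?case by (auto intro: big.b8)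
qed


lemma tsubst_ground: "ground t \<Longrightarrow> tsubst \<sigma> t = t"
  unfolding ground_def
  by (induction t) (auto intro: map_idI)

lemma tsubst_comp: "tsubst \<tau> (tsubst \<sigma> t) = tsubst (\<lambda>x. tsubst \<tau> (\<sigma> x)) t"
  by (induction t) auto

lemma env_Some:
  assumes "length as = length vs" "x \<in> set vs"
  shows "\<exists>a \<in> set as. env vs as x = a"
proof -
  obtain a where a: "map_of (zip vs as) x = Some a"
    using map_of_zip_is_Some[OF assms(1)[symmetric]] assms(2) by blast
  have "(x, a) \<in> set (zip vs as)" by (rule map_of_SomeD[OF a])
  then have "a \<in> set as" by (rule set_zip_rightD)
  moreover have "env vs as x = a" using a by (simp add: env_def)
  ultimately show ?thesis by blast
qed

lemma env_None:
  assumes "x \<notin> set vs" shows "env vs as x = Var x"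
proof -
  have "x \<notin> fst ` set (zip vs as)" using assms by (auto dest: set_zip_leftD)
  then have "map_of (zip vs as) x = None" by (simp add: map_of_eq_None_iff)
  then show ?thesis by (simp add: env_def)
qed

lemma env_app:
  assumes "length as = length vs"
  shows "env (vs @ V) (as @ A) x = (case map_of (zip vs as) x of Some t \<Rightarrow> t | None \<Rightarrow> env V A x)"
proof -
  have m: "map_of (zip (vs @ V) (as @ A)) = map_of (zip V A) ++ map_of (zip vs as)"
    using assms by simp
  show ?thesis
  proof (cases "map_of (zip vs as) x")
    case None
    then show ?thesis unfolding env_def m map_add_def by simp
  next
    case (Some t)
    then show ?thesis unfolding env_def m map_add_def by simp
  qed
qed

lemma env_comp:
  assumes "length as = length vs" "\<forall>a\<in>set as. ground a"
  shows "(\<lambda>x. tsubst (env V A) (env vs as x)) = env (vs @ V) (as @ A)"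
proof
  fix x
  show "tsubst (env V A) (env vs as x) = env (vs @ V) (as @ A) x"
  proof (cases "map_of (zip vs as) x")
    case None
    have "env vs as x = Var x" unfolding env_def None by simp
    moreover have "env (vs @ V) (as @ A) x = env V A x" unfolding env_app[OF assms(1)] None by simp
    ultimately show ?thesis by simp
  next
    case (Some a)
    have "(x, a) \<in> set (zip vs as)" by (rule map_of_SomeD[OF Some])
    then have "a \<in> set as" by (rule set_zip_rightD)
    then have g: "ground a" using assms(2) by blast
    have "env vs as x = a" unfolding env_def Some by simp
    moreover have "env (vs @ V) (as @ A) x = a" unfolding env_app[OF assms(1)] Some by simp
    ultimately show ?thesis using tsubst_ground[OF g] by simp
  qed
qed

lemma tsubst_env_comp:
  assumes "length as = length vs" "\<forall>a\<in>set as. ground a"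
  shows "tsubst (env V A) (tsubst (env vs as) t) = tsubst (env (vs @ V) (as @ A)) t"
  using env_comp[OF assms] by (simp add: tsubst_comp)

lemma tvars_env:
  assumes "length as = length vs" "\<forall>a\<in>set as. ground a"
  shows "tvars (tsubst (env vs as) t) = tvars t - set vs"
proof (induction t)
  case (Var x)
  show ?case
  proof (cases "x \<in> set vs")
    case True
    then show ?thesis using env_Some[OF assms(1) True] assms(2) by (auto simp: ground_def)
  next
    case False
    then show ?thesis by (simp add: env_None) blast
  qed
next
  case (Fn f ts)
  then show ?case by auto
qed

lemma pvars_env:
  assumes "length as = length vs" "\<forall>a\<in>set as. ground a"
  shows "pvars (image_mset (tsubst (env vs as)) Pb) (image_mset (tsubst (env vs as)) Pq) = pvars Pb Pq - set vs"
  unfolding pvars_def image_mset_union[symmetric] using tvars_env[OF assms] by auto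

lemma inst_env:
  assumes "length as = length vs" "\<forall>a\<in>set as. ground a"
  shows "inst I (env V A) (image_mset (tsubst (env vs as)) M) = inst I (env (vs @ V) (as @ A)) M"
  unfolding inst_def using tsubst_env_comp[OF assms] by (simp add: multiset.map_comp comp_def)

lemma pmatch_env:
  assumes "length as = length vs" "\<forall>a\<in>set as. ground a"
  shows "pmatch I F' (as @ as') (vs @ vs') Pb Pq ws bb F'' \<longleftrightarrow>
         pmatch I F' as' vs' (image_mset (tsubst (env vs as)) Pb) (image_mset (tsubst (env vs as)) Pq) ws bb F''"
  unfolding pmatch_def pvars_env[OF assms] image_mset_union[symmetric] inst_env[OF assms]
  by (auto simp: Diff_eq Int_assoc)


lemma subst_fwd:
  assumes "big I tr F X b" and len: "length as = length vs" and gr: "\<forall>a\<in>set as. ground a"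
  shows "(\<forall>as' vs' \<psi>. X = Ev (as @ as') (vs @ vs') \<psi> \<longrightarrow> big I tr F (Ev as' vs' (csubst (env vs as) \<psi>)) b) \<and>
         (\<forall>F' as' vs' \<psi>. X = It F' (as @ as') (vs @ vs') \<psi> \<longrightarrow> big I tr F (It F' as' vs' (csubst (env vs as) \<psi>)) b)"
  using assms(1)
proof (induction rule: big.induct)
  case (b1 A V)
  then show ?case by (auto intro: big.b1)
next
  case (b2 A V B)
  show ?case
  proof (intro conjI allI impI)
    fix as' vs' \<psi>
    assume e: "Ev A V (CBool B) = Ev (as @ as') (vs @ vs') \<psi>"
    have "big I tr F (Ev as' vs' (CBool (tsubst (env vs as) B))) (holds I tr (tsubst (env vs' as') (tsubst (env vs as) B)))"
      by (rule big.b2)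
    then show "big I tr F (Ev as' vs' (csubst (env vs as) \<psi>)) (holds I tr (tsubst (env V A) B))"
      using e by (auto simp: tsubst_env_comp[OF len gr])
  qed simp
next
  case (b3 A V \<psi> b)
  then show ?case by (auto intro: big.b3)
next
  case (b5t A V \<psi>2 \<psi>1)
  then show ?case by (auto intro: big.b5t)
next
  case (b5f A V \<psi>2 \<psi>1 b)
  then show ?case by (auto intro: big.b5f)
next
  case (b8 A V Pb Pq \<psi> b)
  then show ?case by (auto intro: big.b8)
next
  case (b9t F' A V Pb Pq ws bb F'' \<psi>)
  show ?case
  proof (intro conjI allI impI)
    fix F0 as' vs' \<psi>0
    assume e: "It F' A V (CEx Pb Pq \<psi>) = It F0 (as @ as') (vs @ vs') \<psi>0"
    have pm: "pmatch I F' as' vs' (image_mset (tsubst (env vs as)) Pb) (image_mset (tsubst (env vs as)) Pq) ws bb F''"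
      using b9t.hyps(1) e by (auto simp: pmatch_env[OF len gr])
    have "big I tr F (Ev (as' @ bb) (vs' @ ws) (csubst (env vs as) \<psi>)) True"
      using b9t.IH e by auto
    then show "big I tr F (It F0 as' vs' (csubst (env vs as) \<psi>0)) True"
      using pm e by (auto intro: big.b9t)
  qed simp
next
  case (b9f F' A V Pb Pq ws bb F'' \<psi> b)
  show ?case
  proof (intro conjI allI impI)
    fix F0 as' vs' \<psi>0
    assume e: "It F' A V (CEx Pb Pq \<psi>) = It F0 (as @ as') (vs @ vs') \<psi>0"
    have pm: "pmatch I F' as' vs' (image_mset (tsubst (env vs as)) Pb) (image_mset (tsubst (env vs as)) Pq) ws bb F''"
      using b9f.hyps(1) e by (auto simp: pmatch_env[OF len gr])
    have 1: "big I tr F (Ev (as' @ bb) (vs' @ ws) (csubst (env vs as) \<psi>)) False"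
      using b9f.IH(1) e by auto
    have "big I tr F (It (F'' + inst I (env (V @ ws) (A @ bb)) Pb) as' vs' (csubst (env vs as) (CEx Pb Pq \<psi>))) b"
      using b9f.IH(2) e by auto
    moreover have "inst I (env (V @ ws) (A @ bb)) Pb = inst I (env (vs' @ ws) (as' @ bb)) (image_mset (tsubst (env vs as)) Pb)"
      using e by (simp add: inst_env[OF len gr])
    ultimately show "big I tr F (It F0 as' vs' (csubst (env vs as) \<psi>0)) b"
      using pm e 1 by (auto intro: big.b9f)
  qed simp
next
  case (b12 F' A V Pb Pq \<psi>)
  then show ?case by (auto intro!: big.b12 simp: pmatch_env[OF len gr])
qed

lemma csubst_CEx: "csubst \<sigma> \<psi> = CEx Qb Qq \<chi> \<Longrightarrow> \<exists>Pb Pq \<psi>0. \<psi> = CEx Pb Pq \<psi>0 \<and> Qb = image_mset (tsubst \<sigma>) Pb \<and> Qq = image_mset (tsubst \<sigma>) Pq \<and> \<chi> = csubst \<sigma> \<psi>0"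
  by (cases \<psi>) auto

lemma subst_bwd:
  assumes "big I tr F X b" and len: "length as = length vs" and gr: "\<forall>a\<in>set as. ground a"
  shows "(\<forall>as' vs' \<psi>. X = Ev as' vs' (csubst (env vs as) \<psi>) \<longrightarrow> big I tr F (Ev (as @ as') (vs @ vs') \<psi>) b) \<and>
         (\<forall>F' as' vs' \<psi>. X = It F' as' vs' (csubst (env vs as) \<psi>) \<longrightarrow> big I tr F (It F' (as @ as') (vs @ vs') \<psi>) b)"
  using assms(1)
proof (induction rule: big.induct)
  case (b1 A V)
  show ?case
  proof (intro conjI allI impI)
    fix as' vs' \<psi> assume "Ev A V CFalse = Ev as' vs' (csubst (env vs as) \<psi>)"
    then show "big I tr F (Ev (as @ as') (vs @ vs') \<psi>) False" by (cases \<psi>) (auto intro: big.b1)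
  qed simp
next
  case (b2 A V B)
  show ?case
  proof (intro conjI allI impI)
    fix as' vs' \<psi> assume e: "Ev A V (CBool B) = Ev as' vs' (csubst (env vs as) \<psi>)"
    then obtain B0 where B0: "\<psi> = CBool B0" "B = tsubst (env vs as) B0" by (cases \<psi>) auto
    have "big I tr F (Ev (as @ as') (vs @ vs') (CBool B0)) (holds I tr (tsubst (env (vs @ vs') (as @ as')) B0))"
      by (rule big.b2)
    then show "big I tr F (Ev (as @ as') (vs @ vs') \<psi>) (holds I tr (tsubst (env V A) B))"
      using e B0 by (auto simp: tsubst_env_comp[OF len gr])
  qed simp
next
  case (b3 A V \<chi> b)
  show ?case
  proof (intro conjI allI impI)
    fix as' vs' \<psi> assume e: "Ev A V (CNot \<chi>) = Ev as' vs' (csubst (env vs as) \<psi>)"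
    then obtain \<psi>0 where h: "\<psi> = CNot \<psi>0" "\<chi> = csubst (env vs as) \<psi>0" by (cases \<psi>) auto
    have "big I tr F (Ev (as @ as') (vs @ vs') \<psi>0) b"
      using b3.IH[THEN conjunct1, rule_format, of as' vs' \<psi>0] e h by simp
    then show "big I tr F (Ev (as @ as') (vs @ vs') \<psi>) (\<not> b)" unfolding h(1) by (rule big.b3)
  qed simp
next
  case (b5t A V \<chi>2 \<chi>1)
  show ?case
  proof (intro conjI allI impI)
    fix as' vs' \<psi> assume e: "Ev A V (COr \<chi>1 \<chi>2) = Ev as' vs' (csubst (env vs as) \<psi>)"
    then obtain \<psi>1 \<psi>2 where h: "\<psi> = COr \<psi>1 \<psi>2" "\<chi>2 = csubst (env vs as) \<psi>2" by (cases \<psi>) auto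
    have "big I tr F (Ev (as @ as') (vs @ vs') \<psi>2) True"
      using b5t.IH[THEN conjunct1, rule_format, of as' vs' \<psi>2] e h by simp
    then show "big I tr F (Ev (as @ as') (vs @ vs') \<psi>) True" unfolding h(1) by (rule big.b5t)
  qed simp
next
  case (b5f A V \<chi>2 \<chi>1 b)
  show ?case
  proof (intro conjI allI impI)
    fix as' vs' \<psi> assume e: "Ev A V (COr \<chi>1 \<chi>2) = Ev as' vs' (csubst (env vs as) \<psi>)"
    then obtain \<psi>1 \<psi>2 where h: "\<psi> = COr \<psi>1 \<psi>2" "\<chi>1 = csubst (env vs as) \<psi>1" "\<chi>2 = csubst (env vs as) \<psi>2" by (cases \<psi>) auto
    have 1: "big I tr F (Ev (as @ as') (vs @ vs') \<psi>2) False"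
      using b5f.IH(1)[THEN conjunct1, rule_format, of as' vs' \<psi>2] e h by simp
    have 2: "big I tr F (Ev (as @ as') (vs @ vs') \<psi>1) b"
      using b5f.IH(2)[THEN conjunct1, rule_format, of as' vs' \<psi>1] e h by simp
    show "big I tr F (Ev (as @ as') (vs @ vs') \<psi>) b" unfolding h(1) by (rule big.b5f[OF 1 2])
  qed simp
next
  case (b8 A V Qb Qq \<chi> b)
  show ?case
  proof (intro conjI allI impI)
    fix as' vs' \<psi> assume e: "Ev A V (CEx Qb Qq \<chi>) = Ev as' vs' (csubst (env vs as) \<psi>)"
    then have "csubst (env vs as) \<psi> = CEx Qb Qq \<chi>" by simp
    then obtain Pb Pq \<psi>0 where h: "\<psi> = CEx Pb Pq \<psi>0" using csubst_CEx by blast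
    have "big I tr F (It F (as @ as') (vs @ vs') \<psi>) b"
      using b8.IH[THEN conjunct2, rule_format, of F as' vs' \<psi>] e by simp
    then show "big I tr F (Ev (as @ as') (vs @ vs') \<psi>) b" unfolding h by (rule big.b8)
  qed simp
next
  case (b9t F' A V Qb Qq ws bb F'' \<chi>)
  show ?case
  proof (intro conjI allI impI)
    fix F0 as' vs' \<psi> assume e: "It F' A V (CEx Qb Qq \<chi>) = It F0 as' vs' (csubst (env vs as) \<psi>)"
    then have "csubst (env vs as) \<psi> = CEx Qb Qq \<chi>" by simp
    then obtain Pb Pq \<psi>0 where p: "\<psi> = CEx Pb Pq \<psi>0" "Qb = image_mset (tsubst (env vs as)) Pb"
      "Qq = image_mset (tsubst (env vs as)) Pq" "\<chi> = csubst (env vs as) \<psi>0"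
      using csubst_CEx by blast
    have pm: "pmatch I F' (as @ as') (vs @ vs') Pb Pq ws bb F''"
      using b9t.hyps(1) e p by (auto simp: pmatch_env[OF len gr])
    have "big I tr F (Ev (as @ as' @ bb) (vs @ vs' @ ws) \<psi>0) True"
      using b9t.IH[THEN conjunct1, rule_format, of "as' @ bb" "vs' @ ws" \<psi>0] e p by simp
    then have "big I tr F (Ev ((as @ as') @ bb) ((vs @ vs') @ ws) \<psi>0) True" by simp
    from big.b9t[OF pm this] show "big I tr F (It F0 (as @ as') (vs @ vs') \<psi>) True"
      using e p by simp
  qed simp
next
  case (b9f F' A V Qb Qq ws bb F'' \<chi> b)
  show ?case
  proof (intro conjI allI impI)
    fix F0 as' vs' \<psi> assume e: "It F' A V (CEx Qb Qq \<chi>) = It F0 as' vs' (csubst (env vs as) \<psi>)"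
    then have "csubst (env vs as) \<psi> = CEx Qb Qq \<chi>" by simp
    then obtain Pb Pq \<psi>0 where p: "\<psi> = CEx Pb Pq \<psi>0" "Qb = image_mset (tsubst (env vs as)) Pb"
      "Qq = image_mset (tsubst (env vs as)) Pq" "\<chi> = csubst (env vs as) \<psi>0"
      using csubst_CEx by blast
    have pm: "pmatch I F' (as @ as') (vs @ vs') Pb Pq ws bb F''"
      using b9f.hyps(1) e p by (auto simp: pmatch_env[OF len gr])
    have "big I tr F (Ev (as @ as' @ bb) (vs @ vs' @ ws) \<psi>0) False"
      using b9f.IH(1)[THEN conjunct1, rule_format, of "as' @ bb" "vs' @ ws" \<psi>0] e p by simp
    then have 1: "big I tr F (Ev ((as @ as') @ bb) ((vs @ vs') @ ws) \<psi>0) False" by simp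
    have ie: "inst I (env (V @ ws) (A @ bb)) Qb = inst I (env ((vs @ vs') @ ws) ((as @ as') @ bb)) Pb"
      using e p by (simp add: inst_env[OF len gr])
    have "big I tr F (It (F'' + inst I (env (V @ ws) (A @ bb)) Qb) (as @ as') (vs @ vs') \<psi>) b"
      using b9f.IH(2)[THEN conjunct2, rule_format, of "F'' + inst I (env (V @ ws) (A @ bb)) Qb" as' vs' \<psi>] e p by simp
    then have 2: "big I tr F (It (F'' + inst I (env ((vs @ vs') @ ws) ((as @ as') @ bb)) Pb) (as @ as') (vs @ vs') (CEx Pb Pq \<psi>0)) b"
      unfolding ie p(1) .
    from big.b9f[OF pm 1 2] show "big I tr F (It F0 (as @ as') (vs @ vs') \<psi>) b"
      using e p by simp
  qed simp
next
  case (b12 F' A V Qb Qq \<chi>)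
  show ?case
  proof (intro conjI allI impI)
    fix F0 as' vs' \<psi> assume e: "It F' A V (CEx Qb Qq \<chi>) = It F0 as' vs' (csubst (env vs as) \<psi>)"
    then have "csubst (env vs as) \<psi> = CEx Qb Qq \<chi>" by simp
    then obtain Pb Pq \<psi>0 where p: "\<psi> = CEx Pb Pq \<psi>0" "Qb = image_mset (tsubst (env vs as)) Pb"
      "Qq = image_mset (tsubst (env vs as)) Pq" "\<chi> = csubst (env vs as) \<psi>0"
      using csubst_CEx by blast
    then show "big I tr F (It F0 (as @ as') (vs @ vs') \<psi>) False"
      using b12.hyps e by (auto intro!: big.b12 simp: pmatch_env[OF len gr])
  qed simp
qed

lemma subst_iff:
  assumes "length as = length vs" "\<forall>a\<in>set as. ground a"
  shows "big I tr F (Ev as vs \<psi>) b \<longleftrightarrow> big I tr F (Ev [] [] (csubst (env vs as) \<psi>)) b"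
  using subst_fwd[OF _ assms, of I tr F "Ev as vs \<psi>" b] subst_bwd[OF _ assms, of I tr F "Ev [] [] (csubst (env vs as) \<psi>)" b]
  by auto


lemma finite_tvars: "finite (tvars t)"
  by (induction t) auto

lemma finite_pvars: "finite (pvars Pb Pq)"
  unfolding pvars_def by (auto simp: finite_tvars)

lemma pm_to_ps:
  assumes "pmatch I F' [] [] Pb Pq ws bb G"
  shows "pat_subst Pb Pq (env ws bb) \<and> F' = G + inst I (env ws bb) (Pb + Pq) \<and>
         length bb = length ws \<and> (\<forall>a\<in>set bb. ground a)"
proof -
  have s: "set ws = pvars Pb Pq" and l: "length bb = length ws" and g: "\<forall>a\<in>set bb. ground a"
    and f: "F' = G + inst I (env ws bb) (Pb + Pq)"
    using assms unfolding pmatch_def by auto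
  have "pat_subst Pb Pq (env ws bb)"
    unfolding pat_subst_def
  proof (intro allI conjI impI)
    fix x assume "x \<in> pvars Pb Pq"
    then show "ground (env ws bb x)" using env_Some[of bb ws x] l s g by auto
  next
    fix x assume "x \<notin> pvars Pb Pq"
    then show "env ws bb x = Var x" using env_None s by metis
  qed
  then show ?thesis using l g f by auto
qed

lemma ps_to_pm:
  assumes "pat_subst Pb Pq \<sigma>"
  shows "\<exists>ws bb. env ws bb = \<sigma> \<and> set ws = pvars Pb Pq \<and> distinct ws \<and> length bb = length ws \<and> (\<forall>a\<in>set bb. ground a)"
proof -
  have ps: "\<And>x. x \<in> pvars Pb Pq \<Longrightarrow> ground (\<sigma> x)" "\<And>x. x \<notin> pvars Pb Pq \<Longrightarrow> \<sigma> x = Var x"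
    using assms unfolding pat_subst_def by blast+
  obtain ws where ws: "set ws = pvars Pb Pq" "distinct ws"
    using finite_distinct_list[OF finite_pvars[of Pb Pq]] by blast
  have "env ws (map \<sigma> ws) = \<sigma>"
  proof
    fix x
    have m: "map_of (zip ws (map \<sigma> ws)) x = (if x \<in> set ws then Some (\<sigma> x) else None)"
      by (simp add: map_of_zip_map)
    show "env ws (map \<sigma> ws) x = \<sigma> x"
    proof (cases "x \<in> set ws")
      case True
      then show ?thesis unfolding env_def m by simp
    next
      case False
      then have "\<sigma> x = Var x" using ps(2) ws(1) by simp
      then show ?thesis unfolding env_def m using False by simp
    qed
  qed
  moreover have "\<forall>a\<in>set (map \<sigma> ws). ground a" using ps(1) ws(1) by auto
  moreover have "length (map \<sigma> ws) = length ws" by simp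
  ultimately have "env ws (map \<sigma> ws) = \<sigma> \<and> set ws = pvars Pb Pq \<and> distinct ws \<and> length (map \<sigma> ws) = length ws \<and> (\<forall>a\<in>set (map \<sigma> ws). ground a)"
    using ws by blast
  then show ?thesis by blast
qed

lemma pm_iff: "(\<exists>ws bb G. pmatch I F' [] [] Pb Pq ws bb G) \<longleftrightarrow> (\<exists>\<sigma> G. pat_subst Pb Pq \<sigma> \<and> F' = G + inst I \<sigma> (Pb + Pq))"
proof
  assume "\<exists>ws bb G. pmatch I F' [] [] Pb Pq ws bb G"
  then obtain ws bb G where "pmatch I F' [] [] Pb Pq ws bb G" by blast
  from pm_to_ps[OF this] show "\<exists>\<sigma> G. pat_subst Pb Pq \<sigma> \<and> F' = G + inst I \<sigma> (Pb + Pq)" by blast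
next
  assume "\<exists>\<sigma> G. pat_subst Pb Pq \<sigma> \<and> F' = G + inst I \<sigma> (Pb + Pq)"
  then obtain \<sigma> G where a: "pat_subst Pb Pq \<sigma>" "F' = G + inst I \<sigma> (Pb + Pq)" by blast
  obtain ws bb where "env ws bb = \<sigma>" "set ws = pvars Pb Pq" "distinct ws" "length bb = length ws" "\<forall>a\<in>set bb. ground a"
    using ps_to_pm[OF a(1)] by blast
  then have "pmatch I F' [] [] Pb Pq ws bb G" using a unfolding pmatch_def by auto
  then show "\<exists>ws bb G. pmatch I F' [] [] Pb Pq ws bb G" by blast
qed

lemma it_true:
  assumes "big I tr F X b"
  shows "\<forall>F' as vs Pb Pq \<psi>. X = It F' as vs (CEx Pb Pq \<psi>) \<longrightarrow> b \<longrightarrow>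
     (\<exists>ws bb G. pmatch I F' as vs Pb Pq ws bb G \<and> big I tr F (Ev (as @ bb) (vs @ ws) \<psi>) True)"
  using assms
proof (induction rule: big.induct)
  case (b9t F' as vs Pb Pq ws bb F'' \<psi>)
  then show ?case by blast
next
  case (b9f F' as vs Pb Pq ws bb F'' \<psi> b)
  show ?case
  proof (intro allI impI)
    fix F0 as0 vs0 Pb0 Pq0 \<psi>0
    assume e: "It F' as vs (CEx Pb Pq \<psi>) = It F0 as0 vs0 (CEx Pb0 Pq0 \<psi>0)" and b: b
    let ?\<tau> = "env (vs @ ws) (as @ bb)"
    obtain ws' bb' G where g: "pmatch I (F'' + inst I ?\<tau> Pb) as vs Pb Pq ws' bb' G"
      "big I tr F (Ev (as @ bb') (vs @ ws') \<psi>) True"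
      using b9f.IH(2) b by blast
    have "F' = F'' + inst I ?\<tau> Pb + inst I ?\<tau> Pq" using b9f.hyps(1)
      by (simp add: pmatch_def inst_def add.assoc)
    then have "pmatch I F' as vs Pb Pq ws' bb' (G + inst I ?\<tau> Pq)"
      using g(1) unfolding pmatch_def by (simp add: add_ac)
    then show "\<exists>ws bb G. pmatch I F0 as0 vs0 Pb0 Pq0 ws bb G \<and> big I tr F (Ev (as0 @ bb) (vs0 @ ws) \<psi>0) True"
      using g(2) e by blast
  qed
qed auto

lemma it_false:
  assumes "big I tr F X b"
  shows "\<forall>F' Pb Pq \<psi>. X = It F' [] [] (CEx Pb Pq \<psi>) \<longrightarrow> \<not> b \<longrightarrow>
     (\<exists>(n::nat) Fs Gs \<sigma>s. Fs 0 = F' \<and>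
            (\<forall>i < n. pat_subst Pb Pq (\<sigma>s i) \<and> Fs (Suc i) = Gs i + inst I (\<sigma>s i) Pb \<and>
                      Fs i = Gs i + inst I (\<sigma>s i) (Pb + Pq)) \<and>
            (\<forall>i < n. big I tr F (Ev [] [] (csubst (\<sigma>s i) \<psi>)) False) \<and>
            \<not> (\<exists>\<sigma> G. pat_subst Pb Pq \<sigma> \<and> Fs n = G + inst I \<sigma> (Pb + Pq)))"
  using assms
proof (induction rule: big.induct)
  case (b9f F' as vs Pb Pq ws bb F'' \<psi> b)
  show ?case
  proof (intro allI impI)
    fix F0 Pb0 Pq0 \<psi>0
    assume e: "It F' as vs (CEx Pb Pq \<psi>) = It F0 [] [] (CEx Pb0 Pq0 \<psi>0)" and b: "\<not> b"
    then have e2: "as = []" "vs = []" "F0 = F'" "Pb0 = Pb" "Pq0 = Pq" "\<psi>0 = \<psi>" by auto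
    have pm: "pmatch I F' [] [] Pb Pq ws bb F''" using b9f.hyps(1) e2 by simp
    note ps = pm_to_ps[OF pm]
    obtain n Fs Gs \<sigma>s where IH: "Fs 0 = F'' + inst I (env ws bb) Pb"
      "\<forall>i < n. pat_subst Pb Pq (\<sigma>s i) \<and> Fs (Suc i) = Gs i + inst I (\<sigma>s i) Pb \<and> Fs i = Gs i + inst I (\<sigma>s i) (Pb + Pq)"
      "\<forall>i < n. big I tr F (Ev [] [] (csubst (\<sigma>s i) \<psi>)) False"
      "\<not> (\<exists>\<sigma> G. pat_subst Pb Pq \<sigma> \<and> Fs n = G + inst I \<sigma> (Pb + Pq))"
      using b9f.IH(2) b e2 by auto
    have h0: "big I tr F (Ev [] [] (csubst (env ws bb) \<psi>)) False"
      using b9f.hyps(2) e2 ps by (auto simp: subst_iff[of bb ws])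
    define Fs' where "Fs' = (\<lambda>i. case i of 0 \<Rightarrow> F' | Suc j \<Rightarrow> Fs j)"
    define Gs' where "Gs' = (\<lambda>i. case i of 0 \<Rightarrow> F'' | Suc j \<Rightarrow> Gs j)"
    define \<sigma>s' where "\<sigma>s' = (\<lambda>i. case i of 0 \<Rightarrow> env ws bb | Suc j \<Rightarrow> \<sigma>s j)"
    have "Fs' 0 = F0" using e2 by (simp add: Fs'_def)
    moreover have "\<forall>i < Suc n. pat_subst Pb Pq (\<sigma>s' i) \<and> Fs' (Suc i) = Gs' i + inst I (\<sigma>s' i) Pb \<and> Fs' i = Gs' i + inst I (\<sigma>s' i) (Pb + Pq)"
    proof (intro allI impI)
      fix i assume "i < Suc n"
      then show "pat_subst Pb Pq (\<sigma>s' i) \<and> Fs' (Suc i) = Gs' i + inst I (\<sigma>s' i) Pb \<and> Fs' i = Gs' i + inst I (\<sigma>s' i) (Pb + Pq)"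
        using IH(1,2) ps by (cases i) (auto simp: Fs'_def Gs'_def \<sigma>s'_def)
    qed
    moreover have "\<forall>i < Suc n. big I tr F (Ev [] [] (csubst (\<sigma>s' i) \<psi>)) False"
    proof (intro allI impI)
      fix i assume "i < Suc n"
      then show "big I tr F (Ev [] [] (csubst (\<sigma>s' i) \<psi>)) False"
        using IH(3) h0 by (cases i) (auto simp: \<sigma>s'_def)
    qed
    moreover have "\<not> (\<exists>\<sigma> G. pat_subst Pb Pq \<sigma> \<and> Fs' (Suc n) = G + inst I \<sigma> (Pb + Pq))"
      using IH(4) by (simp add: Fs'_def)
    ultimately show "\<exists>(n::nat) Fs Gs \<sigma>s. Fs 0 = F0 \<and>
            (\<forall>i < n. pat_subst Pb0 Pq0 (\<sigma>s i) \<and> Fs (Suc i) = Gs i + inst I (\<sigma>s i) Pb0 \<and>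
                      Fs i = Gs i + inst I (\<sigma>s i) (Pb0 + Pq0)) \<and>
            (\<forall>i < n. big I tr F (Ev [] [] (csubst (\<sigma>s i) \<psi>0)) False) \<and>
            \<not> (\<exists>\<sigma> G. pat_subst Pb0 Pq0 \<sigma> \<and> Fs n = G + inst I \<sigma> (Pb0 + Pq0))"
      using e2 by blast
  qed
next
  case (b12 F' as vs Pb Pq \<psi>)
  show ?case
  proof (intro allI impI)
    fix F0 Pb0 Pq0 \<psi>0
    assume e: "It F' as vs (CEx Pb Pq \<psi>) = It F0 [] [] (CEx Pb0 Pq0 \<psi>0)"
    then have "\<not> (\<exists>\<sigma> G. pat_subst Pb0 Pq0 \<sigma> \<and> F0 = G + inst I \<sigma> (Pb0 + Pq0))"
      using b12.hyps pm_iff[of I F0 Pb0 Pq0] by auto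
    then show "\<exists>(n::nat) Fs Gs \<sigma>s. Fs 0 = F0 \<and>
            (\<forall>i < n. pat_subst Pb0 Pq0 (\<sigma>s i) \<and> Fs (Suc i) = Gs i + inst I (\<sigma>s i) Pb0 \<and>
                      Fs i = Gs i + inst I (\<sigma>s i) (Pb0 + Pq0)) \<and>
            (\<forall>i < n. big I tr F (Ev [] [] (csubst (\<sigma>s i) \<psi>0)) False) \<and>
            \<not> (\<exists>\<sigma> G. pat_subst Pb0 Pq0 \<sigma> \<and> Fs n = G + inst I \<sigma> (Pb0 + Pq0))"
      by (intro exI[of _ 0] exI[of _ "\<lambda>_. F0"]) auto
  qed
qed auto

lemma it_false_conv:
  "\<forall>F' Fs Gs \<sigma>s. Fs 0 = F' \<and>
            (\<forall>i < n. pat_subst Pb Pq (\<sigma>s i) \<and> Fs (Suc i) = Gs i + inst I (\<sigma>s i) Pb \<and>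
                      Fs i = Gs i + inst I (\<sigma>s i) (Pb + Pq)) \<and>
            (\<forall>i < n. big I tr F (Ev [] [] (csubst (\<sigma>s i) \<psi>)) False) \<and>
            \<not> (\<exists>\<sigma> G. pat_subst Pb Pq \<sigma> \<and> Fs n = G + inst I \<sigma> (Pb + Pq))
   \<longrightarrow> big I tr F (It F' [] [] (CEx Pb Pq \<psi>)) False"
proof (induction n)
  case 0
  then show ?case using pm_iff[of I _ Pb Pq] by (auto intro!: big.b12)
next
  case (Suc n)
  show ?case
  proof (intro allI impI, elim conjE)
    fix F' Fs Gs \<sigma>s
    assume a: "Fs 0 = F'"
      "\<forall>i < Suc n. pat_subst Pb Pq (\<sigma>s i) \<and> Fs (Suc i) = Gs i + inst I (\<sigma>s i) Pb \<and> Fs i = Gs i + inst I (\<sigma>s i) (Pb + Pq)"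
      "\<forall>i < Suc n. big I tr F (Ev [] [] (csubst (\<sigma>s i) \<psi>)) False"
      "\<not> (\<exists>\<sigma> G. pat_subst Pb Pq \<sigma> \<and> Fs (Suc n) = G + inst I \<sigma> (Pb + Pq))"
    have p0: "pat_subst Pb Pq (\<sigma>s 0)" "Fs 1 = Gs 0 + inst I (\<sigma>s 0) Pb" "Fs 0 = Gs 0 + inst I (\<sigma>s 0) (Pb + Pq)"
      using a(2) by auto
    obtain ws bb where w: "env ws bb = \<sigma>s 0" "set ws = pvars Pb Pq" "distinct ws" "length bb = length ws" "\<forall>a\<in>set bb. ground a"
      using ps_to_pm[OF p0(1)] by blast
    have pm: "pmatch I F' [] [] Pb Pq ws bb (Gs 0)" using w p0 a(1) unfolding pmatch_def by auto
    have ev: "big I tr F (Ev ([] @ bb) ([] @ ws) \<psi>) False"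
      using a(3) w by (auto simp: subst_iff[of bb ws])
    have "big I tr F (It (Fs 1) [] [] (CEx Pb Pq \<psi>)) False"
    proof (rule Suc.IH[THEN spec[where x="Fs 1"], THEN spec[where x="\<lambda>i. Fs (Suc i)"],
        THEN spec[where x="\<lambda>i. Gs (Suc i)"], THEN spec[where x="\<lambda>i. \<sigma>s (Suc i)"], THEN mp], intro conjI)
      show "Fs (Suc 0) = Fs 1" by simp
      show "\<forall>i<n. pat_subst Pb Pq (\<sigma>s (Suc i)) \<and> Fs (Suc (Suc i)) = Gs (Suc i) + inst I (\<sigma>s (Suc i)) Pb \<and>
              Fs (Suc i) = Gs (Suc i) + inst I (\<sigma>s (Suc i)) (Pb + Pq)" using a(2) by simp
      show "\<forall>i<n. big I tr F (Ev [] [] (csubst (\<sigma>s (Suc i)) \<psi>)) False" using a(3) by simp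
      show "\<not> (\<exists>\<sigma> G. pat_subst Pb Pq \<sigma> \<and> Fs (Suc n) = G + inst I \<sigma> (Pb + Pq))" by (rule a(4))
    qed
    then have "big I tr F (It (Gs 0 + inst I (env ([] @ ws) ([] @ bb)) Pb) [] [] (CEx Pb Pq \<psi>)) False"
      using p0 w by simp
    then show "big I tr F (It F' [] [] (CEx Pb Pq \<psi>)) False"
      by (rule big.b9f[OF pm ev])
  qed
qed


lemma big_CFalse: "big I tr F (Ev as vs CFalse) b \<longleftrightarrow> \<not> b"
  by (auto elim: big.cases intro: big.b1)

lemma big_CNot: "big I tr F (Ev as vs (CNot \<psi>)) b \<longleftrightarrow> big I tr F (Ev as vs \<psi>) (\<not> b)"
proof
  assume "big I tr F (Ev as vs (CNot \<psi>)) b" then show "big I tr F (Ev as vs \<psi>) (\<not> b)"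
    by (cases rule: big.cases) auto
next
  assume "big I tr F (Ev as vs \<psi>) (\<not> b)" then show "big I tr F (Ev as vs (CNot \<psi>)) b"
    using big.b3 by fastforce
qed

lemma big_COr: "big I tr F (Ev as vs (COr \<psi>1 \<psi>2)) b \<longleftrightarrow>
   (b \<and> big I tr F (Ev as vs \<psi>2) True) \<or> (big I tr F (Ev as vs \<psi>2) False \<and> big I tr F (Ev as vs \<psi>1) b)"
  by (auto elim: big.cases intro: big.b5t big.b5f)

lemma big_CEx: "big I tr F (Ev as vs (CEx Pb Pq \<psi>)) b \<longleftrightarrow> big I tr F (It F as vs (CEx Pb Pq \<psi>)) b"
  by (auto elim: big.cases intro: big.b8)

theorem lemma5:
  fixes I :: "'f \<Rightarrow> 'd list \<Rightarrow> 'd" and tr :: 'f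
    and F :: "'d multiset"
    and \<phi> \<phi>1 \<phi>2 \<psi> :: "('f, 'v) cond"
    and Pb Pq :: "('f, 'v) trm multiset"
  assumes "sentence \<phi>" and "sentence \<phi>1" and "sentence \<phi>2"
    and "sentence (CEx Pb Pq \<psi>)"
  shows
    "((reaches I tr \<phi> F True \<or> reaches I tr \<phi> F False) \<and>
     (\<forall>t. nf_reach I tr (init \<phi> F) t \<longrightarrow> t = Sat True \<or> t = Sat False)) \<and>
    (reaches I tr CFalse F False \<and> \<not> reaches I tr CFalse F True) \<and>
    (\<forall>B. reaches I tr \<phi> F B \<longleftrightarrow> reaches I tr (CNot \<phi>) F (\<not> B)) \<and>
    (reaches I tr (COr \<phi>1 \<phi>2) F True \<longleftrightarrow> reaches I tr \<phi>1 F True \<or> reaches I tr \<phi>2 F True) \<and>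
    (reaches I tr (COr \<phi>1 \<phi>2) F False \<longleftrightarrow> reaches I tr \<phi>1 F False \<and> reaches I tr \<phi>2 F False) \<and>
    (reaches I tr (CEx Pb Pq \<psi>) F True \<longleftrightarrow>
         (\<exists>\<sigma> F'. pat_subst Pb Pq \<sigma> \<and> F' + inst I \<sigma> (Pq + Pb) = F \<and>
                 reaches I tr (csubst \<sigma> \<psi>) F True)) \<and>
    (reaches I tr (CEx Pb Pq \<psi>) F False \<longleftrightarrow>
         (\<exists>(n::nat) (Fs :: nat \<Rightarrow> 'd multiset) (Gs :: nat \<Rightarrow> 'd multiset) (\<sigma>s :: nat \<Rightarrow> 'v \<Rightarrow> ('f, 'v) trm).
            Fs 0 = F \<and>
            (\<forall>i < n. pat_subst Pb Pq (\<sigma>s i) \<and>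
                      Fs (Suc i) = Gs i + inst I (\<sigma>s i) Pb \<and>
                      Fs i = Gs i + inst I (\<sigma>s i) (Pb + Pq)) \<and>
            (\<forall>i < n. reaches I tr (csubst (\<sigma>s i) \<psi>) F False) \<and>
            \<not> (\<exists>\<sigma> G. pat_subst Pb Pq \<sigma> \<and> Fs n = G + inst I \<sigma> (Pb + Pq)))) \<and>
    (reaches I tr (COr \<phi> (CNot \<phi>)) F True \<and>
       (reaches I tr \<phi> F True \<and> reaches I tr \<phi> F False \<longrightarrow> reaches I tr (COr \<phi> (CNot \<phi>)) F False))"
proof -
  have wf: "wf_cond \<phi>" "wf_cond \<phi>1" "wf_cond \<phi>2" using assms unfolding sentence_def by auto
  let ?E = "\<lambda>\<chi> b. big I tr F (Ev [] [] \<chi>) b"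
  note R = reaches_big[of I tr _ F]
  obtain c where c: "?E \<phi> c" using big_exists[OF wf(1)] by blast
  have P1a: "reaches I tr \<phi> F True \<or> reaches I tr \<phi> F False"
    unfolding R using c by (cases c) simp_all
  have P1b: "\<forall>t. nf_reach I tr (init \<phi> F) t \<longrightarrow> t = Sat True \<or> t = Sat False"
  proof (intro allI impI)
    fix t assume a: "nf_reach I tr (init \<phi> F) t"
    show "t = Sat True \<or> t = Sat False"
    proof (cases t)
      case (St F' T)
      have cs: "(cstep I tr)\<^sup>*\<^sup>* (St F [Ev [] [] \<phi>]) (St F' T)" using a St unfolding nf_reach_def init_def by simp
      have h: "F' = F \<and> (ss I tr F)\<^sup>*\<^sup>* [Ev [] [] \<phi>] T" using cstep_star_inv[OF cs] by simp
      have g0: "good [Ev [] [] \<phi>]" using good_one[of "[]" "Ev [] [] \<phi>"] by simp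
      have "good T" by (rule good_star[OF h[THEN conjunct2] g0])
      from good_progress[OF this, of I tr F] obtain u where "cstep I tr (St F T) u" ..
      moreover have "\<not> (\<exists>u. cstep I tr (St F T) u)" using a St h unfolding nf_reach_def by simp
      ultimately show ?thesis by blast
    next
      case (Sat b) then show ?thesis by (cases b) auto
    qed
  qed
  have P2: "reaches I tr CFalse F False \<and> \<not> reaches I tr CFalse F True"
    unfolding R big_CFalse by simp
  have P3: "\<forall>B. reaches I tr \<phi> F B \<longleftrightarrow> reaches I tr (CNot \<phi>) F (\<not> B)"
    unfolding R big_CNot by simp
  obtain c2 where c2: "?E \<phi>2 c2" using big_exists[OF wf(3)] by blast
  have P4: "reaches I tr (COr \<phi>1 \<phi>2) F True \<longleftrightarrow> reaches I tr \<phi>1 F True \<or> reaches I tr \<phi>2 F True"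
    unfolding R big_COr using c2 by (cases c2) auto
  have P5: "reaches I tr (COr \<phi>1 \<phi>2) F False \<longleftrightarrow> reaches I tr \<phi>1 F False \<and> reaches I tr \<phi>2 F False"
    unfolding R big_COr by auto
  have P6: "reaches I tr (CEx Pb Pq \<psi>) F True \<longleftrightarrow>
         (\<exists>\<sigma> F'. pat_subst Pb Pq \<sigma> \<and> F' + inst I \<sigma> (Pq + Pb) = F \<and> reaches I tr (csubst \<sigma> \<psi>) F True)"
  proof
    assume "reaches I tr (CEx Pb Pq \<psi>) F True"
    then have itt: "big I tr F (It F [] [] (CEx Pb Pq \<psi>)) True" unfolding R big_CEx .
    obtain ws bb G where g: "pmatch I F [] [] Pb Pq ws bb G" "big I tr F (Ev bb ws \<psi>) True"
      using it_true[OF itt, rule_format, OF refl] by auto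
    note ps = pm_to_ps[OF g(1)]
    have h: "?E (csubst (env ws bb) \<psi>) True" using g(2) ps by (auto simp: subst_iff[of bb ws])
    show "\<exists>\<sigma> F'. pat_subst Pb Pq \<sigma> \<and> F' + inst I \<sigma> (Pq + Pb) = F \<and> reaches I tr (csubst \<sigma> \<psi>) F True"
    proof (intro exI conjI)
      show "pat_subst Pb Pq (env ws bb)" using ps by blast
      show "G + inst I (env ws bb) (Pq + Pb) = F" using ps by (simp add: add.commute)
      show "reaches I tr (csubst (env ws bb) \<psi>) F True" unfolding R by (rule h)
    qed
  next
    assume "\<exists>\<sigma> F'. pat_subst Pb Pq \<sigma> \<and> F' + inst I \<sigma> (Pq + Pb) = F \<and> reaches I tr (csubst \<sigma> \<psi>) F True"
    then obtain \<sigma> F' where a: "pat_subst Pb Pq \<sigma>" "F' + inst I \<sigma> (Pq + Pb) = F" "?E (csubst \<sigma> \<psi>) True"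
      using R by blast
    obtain ws bb where w: "env ws bb = \<sigma>" "set ws = pvars Pb Pq" "distinct ws" "length bb = length ws" "\<forall>a\<in>set bb. ground a"
      using ps_to_pm[OF a(1)] by blast
    have pm: "pmatch I F [] [] Pb Pq ws bb F'" using w a(2) unfolding pmatch_def by (auto simp: add.commute)
    have "big I tr F (Ev ([] @ bb) ([] @ ws) \<psi>) True" using a(3) w by (auto simp: subst_iff[of bb ws])
    then have "big I tr F (It F [] [] (CEx Pb Pq \<psi>)) True" by (rule big.b9t[OF pm])
    then show "reaches I tr (CEx Pb Pq \<psi>) F True" unfolding R big_CEx .
  qed
  have P7: "reaches I tr (CEx Pb Pq \<psi>) F False \<longleftrightarrow>
         (\<exists>(n::nat) (Fs :: nat \<Rightarrow> 'd multiset) (Gs :: nat \<Rightarrow> 'd multiset) (\<sigma>s :: nat \<Rightarrow> 'v \<Rightarrow> ('f, 'v) trm).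
            Fs 0 = F \<and>
            (\<forall>i < n. pat_subst Pb Pq (\<sigma>s i) \<and>
                      Fs (Suc i) = Gs i + inst I (\<sigma>s i) Pb \<and>
                      Fs i = Gs i + inst I (\<sigma>s i) (Pb + Pq)) \<and>
            (\<forall>i < n. reaches I tr (csubst (\<sigma>s i) \<psi>) F False) \<and>
            \<not> (\<exists>\<sigma> G. pat_subst Pb Pq \<sigma> \<and> Fs n = G + inst I \<sigma> (Pb + Pq)))"
    unfolding R big_CEx
  proof
    assume "big I tr F (It F [] [] (CEx Pb Pq \<psi>)) False"
    from it_false[OF this, rule_format, OF refl] show "\<exists>(n::nat) (Fs :: nat \<Rightarrow> 'd multiset) (Gs :: nat \<Rightarrow> 'd multiset) (\<sigma>s :: nat \<Rightarrow> 'v \<Rightarrow> ('f, 'v) trm).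
            Fs 0 = F \<and>
            (\<forall>i < n. pat_subst Pb Pq (\<sigma>s i) \<and>
                      Fs (Suc i) = Gs i + inst I (\<sigma>s i) Pb \<and>
                      Fs i = Gs i + inst I (\<sigma>s i) (Pb + Pq)) \<and>
            (\<forall>i < n. ?E (csubst (\<sigma>s i) \<psi>) False) \<and>
            \<not> (\<exists>\<sigma> G. pat_subst Pb Pq \<sigma> \<and> Fs n = G + inst I \<sigma> (Pb + Pq))" by simp
  next
    assume "\<exists>(n::nat) (Fs :: nat \<Rightarrow> 'd multiset) (Gs :: nat \<Rightarrow> 'd multiset) (\<sigma>s :: nat \<Rightarrow> 'v \<Rightarrow> ('f, 'v) trm).
            Fs 0 = F \<and>
            (\<forall>i < n. pat_subst Pb Pq (\<sigma>s i) \<and>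
                      Fs (Suc i) = Gs i + inst I (\<sigma>s i) Pb \<and>
                      Fs i = Gs i + inst I (\<sigma>s i) (Pb + Pq)) \<and>
            (\<forall>i < n. ?E (csubst (\<sigma>s i) \<psi>) False) \<and>
            \<not> (\<exists>\<sigma> G. pat_subst Pb Pq \<sigma> \<and> Fs n = G + inst I \<sigma> (Pb + Pq))"
    then obtain n Fs Gs \<sigma>s where "Fs 0 = F \<and>
            (\<forall>i < n. pat_subst Pb Pq (\<sigma>s i) \<and>
                      Fs (Suc i) = Gs i + inst I (\<sigma>s i) Pb \<and>
                      Fs i = Gs i + inst I (\<sigma>s i) (Pb + Pq)) \<and>
            (\<forall>i < n. ?E (csubst (\<sigma>s i) \<psi>) False) \<and>
            \<not> (\<exists>\<sigma> G. pat_subst Pb Pq \<sigma> \<and> Fs n = G + inst I \<sigma> (Pb + Pq))" by blast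
    then show "big I tr F (It F [] [] (CEx Pb Pq \<psi>)) False"
      by (rule it_false_conv[rule_format])
  qed
  have P8: "reaches I tr (COr \<phi> (CNot \<phi>)) F True \<and>
       (reaches I tr \<phi> F True \<and> reaches I tr \<phi> F False \<longrightarrow> reaches I tr (COr \<phi> (CNot \<phi>)) F False)"
    unfolding R big_COr big_CNot using c by (cases c) auto
  show ?thesis
    by (rule conjI[OF conjI[OF P1a P1b] conjI[OF P2 conjI[OF P3 conjI[OF P4 conjI[OF P5 conjI[OF P6 conjI[OF P7 P8]]]]]]])
qed

end
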